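(* Let $r\ge2$, $\ell\ge1$, let $C=(w_1,\dots,w_{2\ell+1})$ be a semi-valid tuple in $\Omega_n$, and let $i$ and $1\le k\le\ell$ be such that $C$ is $(i,k)$-consecutive. If each of $C_{i,k,-1}$, $C_{i,k,0}$, $C_{i,k,1}$ is semi-valid, then $$|H_n^{(r)}(C)|\ge\min\{|H_n^{(r)}(C_{i,k,-1})|,|H_n^{(r)}(C_{i,k,1})|\}.$$ Moreover, this inequality is strict if $r\ge3$ and $n\ge3r-5$.
   Context: $\Omega_n=\{v_0,\dots,v_{n-1}\}$ with cyclic order $v_0<\dots<v_{n-1}<v_0$, indices of $v$ mod $n$. For distinct vertices $u,w$, $(u,w)$ is the set of vertices strictly between $u$ and $w$ moving clockwise from $u$ to $w$, and $[u,w]=(u,w)\cup\{u,w\}$. A tuple $C=(w_1,\dots,w_{2\ell+1})$ of distinct vertices is semi-valid if $w_1<w_3<\dots<w_{2\ell+1}<w_2<w_4<\dots<w_{2\ell}<w_1$ in clockwise cyclic order; indices of the $w$'s are taken mod $2\ell+1$. $H_n^{(r)}(C)=\{e\in\binom{\Omega_n}{r}: e\cap[w_p,w_{p-1}]\neq\emptyset\ \forall p\in\{1,\dots,2\ell+1\}\}$. $C$ is $(i,k)$-consecutive if there is $j$ with $w_{i+2s}=v_{j+s}$ for all $0\le s<k$. In that case, for an integer $m$, $C_{i,k,m}=(w'_1,\dots,w'_{2\ell+1})$ is the tuple with $w'_{i+2s}=v_{j+s+m}$ for $0\le s<k$ and $w'_p=w_p$ for all other $p$ (so $C_{i,k,0}=C$).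 *)

theory Defs
  imports Main
begin

text \<open>Vertices of \<Omega>_n are 0,...,n-1 (v_j = j), cyclic order 0 < 1 < ... < n-1 < 0.
  Indices of v are taken mod n: v_j for j :: int is the natural number j mod n.\<close>

definition vtx :: "nat \<Rightarrow> int \<Rightarrow> nat" where
  "vtx n j = nat (j mod int n)"

definition cwd :: "nat \<Rightarrow> nat \<Rightarrow> nat \<Rightarrow> nat" where
  "cwd n u w = nat ((int w - int u) mod int n)"

definition cint :: "nat \<Rightarrow> nat \<Rightarrow> nat \<Rightarrow> nat set" where
  "cint n u w = {x. x < n \<and> cwd n u x \<le> cwd n u w}"

definition cyc_ordered :: "nat \<Rightarrow> nat list \<Rightarrow> bool" where
  "cyc_ordered n xs \<longleftrightarrow> distinct xs \<and> set xs \<subseteq> {..<n} \<and>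
     (\<forall>t s. t < s \<and> s < length xs \<longrightarrow> cwd n (xs ! 0) (xs ! t) < cwd n (xs ! 0) (xs ! s))"

text \<open>Tuples C = (w_1,...,w_{2l+1}) are functions C :: nat => nat, of which only the values
  at 1,...,2l+1 matter. Indices are taken mod 2l+1: w_p = C (idx l p) for p :: int.\<close>
definition idx :: "nat \<Rightarrow> int \<Rightarrow> nat" where
  "idx l p = nat ((p - 1) mod int (2*l+1)) + 1"

definition wt :: "nat \<Rightarrow> (nat \<Rightarrow> nat) \<Rightarrow> int \<Rightarrow> nat" where
  "wt l C p = C (idx l p)"

definition semi_valid :: "nat \<Rightarrow> nat \<Rightarrow> (nat \<Rightarrow> nat) \<Rightarrow> bool" where
  "semi_valid n l C \<longleftrightarrow>
     cyc_ordered n (map (\<lambda>t. C (2*t+1)) [0..<l+1] @ map (\<lambda>t. C (2*t+2)) [0..<l])"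

definition H :: "nat \<Rightarrow> nat \<Rightarrow> nat \<Rightarrow> (nat \<Rightarrow> nat) \<Rightarrow> nat set set" where
  "H n r l C = {e. e \<subseteq> {..<n} \<and> card e = r \<and>
     (\<forall>p\<in>{1..int (2*l+1)}. e \<inter> cint n (wt l C p) (wt l C (p - 1)) \<noteq> {})}"

definition consec_with :: "nat \<Rightarrow> nat \<Rightarrow> (nat \<Rightarrow> nat) \<Rightarrow> int \<Rightarrow> nat \<Rightarrow> int \<Rightarrow> bool" where
  "consec_with n l C i k j \<longleftrightarrow> (\<forall>s<k. wt l C (i + 2 * int s) = vtx n (j + int s))"

definition consecutive :: "nat \<Rightarrow> nat \<Rightarrow> (nat \<Rightarrow> nat) \<Rightarrow> int \<Rightarrow> nat \<Rightarrow> bool" where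
  "consecutive n l C i k \<longleftrightarrow> (\<exists>j. consec_with n l C i k j)"

text \<open>C_{i,k,m}, given the witness j: w'_{i+2s} = v_{j+s+m} for 0 <= s < k, other entries unchanged\<close>
definition shiftC :: "nat \<Rightarrow> nat \<Rightarrow> (nat \<Rightarrow> nat) \<Rightarrow> int \<Rightarrow> nat \<Rightarrow> int \<Rightarrow> int \<Rightarrow> (nat \<Rightarrow> nat)" where
  "shiftC n l C i k j m = (\<lambda>q. if \<exists>s<k. idx l (i + 2 * int s) = q
       then vtx n (j + int (SOME s. s < k \<and> idx l (i + 2 * int s) = q) + m)
       else C q)"

end

theory Submission
  imports Defs
begin


locale core =
  fixes n k r :: nat and Fx :: "nat set set" and \<alpha> \<beta> :: "nat \<Rightarrow> nat"
  assumes k1: "1 \<le> k"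
    and alpha: "\<And>s. s < k \<Longrightarrow> k+1 < \<alpha> s \<and> \<alpha> s < n"
    and beta: "\<And>s. s < k \<Longrightarrow> k+1 < \<beta> s \<and> \<beta> s < n"
    and fx: "\<And>f. f \<in> Fx \<Longrightarrow> {..k+1} \<subseteq> f \<or> {..k+1} \<inter> f = {}"
begin

definition Phi where "Phi = {e. e \<subseteq> {..<n} \<and> card e = r \<and> (\<forall>f\<in>Fx. e \<inter> f \<noteq> {})}"
definition Dm where "Dm m = {e. \<forall>s<k. e \<inter> {s+m..\<alpha> s} \<noteq> {}}"
definition Em where "Em m = {e. \<forall>s<k. e \<inter> ({\<beta> s..<n} \<union> {..s+m}) \<noteq> {}}"
definition G where "G m = Phi \<inter> Dm m \<inter> Em m"
definition NN where "NN m = Phi - Dm m - Em m"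

lemma kn: "k+1 < n" using alpha[of 0] k1 by auto

lemma finPhi: "finite Phi"
  by (rule finite_subset[of _ "Pow {..<n}"]) (auto simp: Phi_def)

lemma card_G: "card (G m) + card (Phi - Dm m) + card (Phi - Em m) = card Phi + card (NN m)"
proof -
  let ?X = "Phi - Dm m" and ?Y = "Phi - Em m"
  have f: "finite ?X" "finite ?Y" "finite (G m)" using finPhi by (auto simp: G_def)
  have "Phi = G m \<union> (?X \<union> ?Y)" by (auto simp: G_def)
  moreover have "G m \<inter> (?X \<union> ?Y) = {}" by (auto simp: G_def)
  ultimately have "card Phi = card (G m) + card (?X \<union> ?Y)"
  proof -
    assume a: "Phi = G m \<union> (?X \<union> ?Y)" "G m \<inter> (?X \<union> ?Y) = {}"
    have "card (G m \<union> (?X \<union> ?Y)) = card (G m) + card (?X \<union> ?Y)"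
      by (rule card_Un_disjoint) (use f a(2) in auto)
    then show ?thesis by (simp only: a(1)[symmetric])
  qed
  moreover have "card (?X \<union> ?Y) + card (?X \<inter> ?Y) = card ?X + card ?Y"
    using card_Un_Int[OF f(1) f(2)] by simp
  moreover have "card (?X \<inter> ?Y) = card (NN m)" by (rule arg_cong[where f=card]) (auto simp: NN_def)
  ultimately show ?thesis by linarith
qed

definition shf :: "nat \<Rightarrow> nat" where "shf x = (if x \<le> k+1 then Suc x else x)"
definition ushf :: "nat \<Rightarrow> nat" where "ushf x = (if x \<le> k+1 then x - 1 else x)"

lemma NN_D: assumes "e \<in> NN m" shows "\<exists>s<k. e \<inter> {s+m..\<alpha> s} = {}"
  using assms by (auto simp: NN_def Dm_def)
lemma NN_E: assumes "e \<in> NN m" shows "\<exists>s<k. e \<inter> ({\<beta> s..<n} \<union> {..s+m}) = {}"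
  using assms by (auto simp: NN_def Em_def)

lemma NN_not_top: assumes "e \<in> NN m" "m \<le> 1" shows "k+1 \<notin> e"
proof -
  obtain s where s: "s < k" "e \<inter> {s+m..\<alpha> s} = {}" using NN_D[OF assms(1)] by blast
  have "k+1 \<in> {s+m..\<alpha> s}" using s(1) alpha[OF s(1)] assms(2) by auto
  then show ?thesis using s(2) by blast
qed

lemma NN_not_bot: assumes "e \<in> NN m" shows "0 \<notin> e"
proof -
  obtain s where s: "s < k" "e \<inter> ({\<beta> s..<n} \<union> {..s+m}) = {}" using NN_E[OF assms(1)] by blast
  then show ?thesis by blast
qed

lemma nz_mem: "0 \<notin> e \<Longrightarrow> x \<in> e \<Longrightarrow> x \<noteq> 0"
  by (rule ccontr) simp

lemma gt_disj: "{..k+1} \<inter> f = {} \<Longrightarrow> x \<in> f \<Longrightarrow> k+1 < x"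
  by (metis IntI atMost_iff empty_iff not_less)

lemma le_top: "x \<in> e \<Longrightarrow> k+1 \<notin> e \<Longrightarrow> x \<le> k+1 \<Longrightarrow> x \<le> k"
  by (cases "x = k+1") auto

lemma inj_shf: assumes "k+1 \<notin> e" shows "inj_on shf e"
proof (rule inj_onI)
  fix x y assume xy: "x \<in> e" "y \<in> e" "shf x = shf y"
  show "x = y" using xy le_top[OF xy(1) assms] le_top[OF xy(2) assms] by (auto simp: shf_def split: if_splits)
qed

lemma inj_ushf: assumes "0 \<notin> e" shows "inj_on ushf e"
proof (rule inj_onI)
  fix x y assume xy: "x \<in> e" "y \<in> e" "ushf x = ushf y"
  have nz: "x \<noteq> 0" "y \<noteq> 0" using nz_mem[OF assms] xy by auto
  show "x = y" using xy nz by (auto simp: ushf_def split: if_splits)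
qed

lemma Phi_modify:
  assumes "e \<in> Phi" "e' \<subseteq> {..<n}" "card e' = r"
    and "\<And>x. x \<in> e \<Longrightarrow> x > k+1 \<Longrightarrow> x \<in> e'"
    and "e \<inter> {..k+1} \<noteq> {} \<Longrightarrow> e' \<inter> {..k+1} \<noteq> {}"
  shows "e' \<in> Phi"
  unfolding Phi_def
proof (intro CollectI conjI ballI)
  fix f assume f: "f \<in> Fx"
  from assms(1) f obtain x where x: "x \<in> e" "x \<in> f" by (auto simp: Phi_def)
  show "e' \<inter> f \<noteq> {}"
  proof (cases "{..k+1} \<subseteq> f")
    case True
    show ?thesis
    proof (cases "x \<le> k+1")
      case True
      then have "e \<inter> {..k+1} \<noteq> {}" using x by auto
      then show ?thesis using assms(5) \<open>{..k+1} \<subseteq> f\<close> by blast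
    next
      case False
      then have "x \<in> e'" using x assms(4) by auto
      then show ?thesis using x \<open>{..k+1} \<subseteq> f\<close> by blast
    qed
  next
    case False
    then have "{..k+1} \<inter> f = {}" using fx[OF f] by blast
    then have "x > k+1" using x gt_disj by blast
    then have "x \<in> e'" using x assms(4) by auto
    then show ?thesis using x by blast
  qed
qed (use assms in auto)

lemma sh_NN: assumes "e \<in> NN m" "m \<le> 1" shows "shf ` e \<in> NN (Suc m)"
proof -
  have top: "k+1 \<notin> e" using NN_not_top assms by blast
  have eP: "e \<in> Phi" using assms by (auto simp: NN_def)
  have fe: "finite e" using eP finite_subset[of e "{..<n}"] by (auto simp: Phi_def)
  have P: "shf ` e \<in> Phi"
  proof (rule Phi_modify[OF eP])
    show "shf ` e \<subseteq> {..<n}"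
    proof
      fix y assume "y \<in> shf ` e"
      then obtain x where x: "x \<in> e" "y = shf x" by auto
      have "x < n" using x eP by (auto simp: Phi_def)
      then show "y \<in> {..<n}" using x kn le_top[OF x(1) top] by (auto simp: shf_def)
    qed
    show "card (shf ` e) = r" using card_image[OF inj_shf[OF top]] eP by (auto simp: Phi_def)
    show "x \<in> shf ` e" if "x \<in> e" "k + 1 < x" for x
      using that by (intro image_eqI[of x shf x]) (auto simp: shf_def)
    show "shf ` e \<inter> {..k + 1} \<noteq> {}" if "e \<inter> {..k + 1} \<noteq> {}"
    proof -
      from that obtain x where "x \<in> e" "x \<le> k+1" by auto
      then have "x \<le> k" using top by (cases "x = k+1") auto
      then have "shf x \<in> shf ` e" "shf x \<le> k+1" using \<open>x \<in> e\<close> by (auto simp: shf_def)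
      then show ?thesis by blast
    qed
  qed
  obtain s where s: "s < k" "e \<inter> {s+m..\<alpha> s} = {}" using NN_D[OF assms(1)] by blast
  obtain t where t: "t < k" "e \<inter> ({\<beta> t..<n} \<union> {..t+m}) = {}" using NN_E[OF assms(1)] by blast
  have D: "shf ` e \<notin> Dm (Suc m)"
  proof
    assume "shf ` e \<in> Dm (Suc m)"
    then have "shf ` e \<inter> {s + Suc m..\<alpha> s} \<noteq> {}" using s(1) by (auto simp: Dm_def)
    then obtain y where y: "y \<in> shf ` e" "y \<in> {s + Suc m..\<alpha> s}" by blast
    then obtain x where x: "x \<in> e" "y = shf x" by auto
    have "x \<in> {s+m..\<alpha> s}" using x y alpha[OF s(1)] by (auto simp: shf_def split: if_splits)
    then show False using s(2) x(1) by blast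
  qed
  have E: "shf ` e \<notin> Em (Suc m)"
  proof
    assume "shf ` e \<in> Em (Suc m)"
    then have "shf ` e \<inter> ({\<beta> t..<n} \<union> {..t + Suc m}) \<noteq> {}" using t(1) by (auto simp: Em_def)
    then obtain y where y: "y \<in> shf ` e" "y \<in> {\<beta> t..<n} \<union> {..t + Suc m}" by blast
    then obtain x where x: "x \<in> e" "y = shf x" by auto
    have "x \<noteq> k+1" using top x by auto
    then have "x \<in> {\<beta> t..<n} \<union> {..t+m}" using x y beta[OF t(1)] t(1) assms(2)
      by (auto simp: shf_def split: if_splits)
    then show False using t(2) x(1) by blast
  qed
  show ?thesis using P D E by (auto simp: NN_def)
qed

lemma ush_NN: assumes "e \<in> NN (Suc m)" "m \<le> 1" shows "ushf ` e \<in> NN m"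
proof -
  have bot: "0 \<notin> e" using NN_not_bot assms by blast
  have eP: "e \<in> Phi" using assms by (auto simp: NN_def)
  have P: "ushf ` e \<in> Phi"
  proof (rule Phi_modify[OF eP])
    show "ushf ` e \<subseteq> {..<n}" using eP kn by (auto simp: Phi_def ushf_def)
    show "card (ushf ` e) = r" using card_image[OF inj_ushf[OF bot]] eP by (auto simp: Phi_def)
    show "x \<in> ushf ` e" if "x \<in> e" "k + 1 < x" for x
      using that by (intro image_eqI[of x ushf x]) (auto simp: ushf_def)
    show "ushf ` e \<inter> {..k + 1} \<noteq> {}" if "e \<inter> {..k + 1} \<noteq> {}"
    proof -
      from that obtain x where "x \<in> e" "x \<le> k+1" by auto
      then show ?thesis by (auto simp: ushf_def)
    qed
  qed
  obtain s where s: "s < k" "e \<inter> {s+Suc m..\<alpha> s} = {}" using NN_D[OF assms(1)] by blast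
  obtain t where t: "t < k" "e \<inter> ({\<beta> t..<n} \<union> {..t+Suc m}) = {}" using NN_E[OF assms(1)] by blast
  have D: "ushf ` e \<notin> Dm m"
  proof
    assume "ushf ` e \<in> Dm m"
    then have "ushf ` e \<inter> {s + m..\<alpha> s} \<noteq> {}" using s(1) by (auto simp: Dm_def)
    then obtain y where y: "y \<in> ushf ` e" "y \<in> {s + m..\<alpha> s}" by blast
    then obtain x where x: "x \<in> e" "y = ushf x" by auto
    have "x \<noteq> 0" using nz_mem[OF bot x(1)] .
    then have "x \<in> {s+Suc m..\<alpha> s}" using x y alpha[OF s(1)] s(1) assms(2)
      by (auto simp: ushf_def split: if_splits)
    then show False using s(2) x(1) by blast
  qed
  have E: "ushf ` e \<notin> Em m"
  proof
    assume "ushf ` e \<in> Em m"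
    then have "ushf ` e \<inter> ({\<beta> t..<n} \<union> {..t + m}) \<noteq> {}" using t(1) by (auto simp: Em_def)
    then obtain y where y: "y \<in> ushf ` e" "y \<in> {\<beta> t..<n} \<union> {..t + m}" by blast
    then obtain x where x: "x \<in> e" "y = ushf x" by auto
    have "x \<noteq> 0" using nz_mem[OF bot x(1)] .
    then have "x \<in> {\<beta> t..<n} \<union> {..t+Suc m}" using x y beta[OF t(1)] t(1) assms(2)
      by (auto simp: ushf_def split: if_splits)
    then show False using t(2) x(1) by blast
  qed
  show ?thesis using P D E by (auto simp: NN_def)
qed

lemma card_NN: assumes "m \<le> 1" shows "card (NN m) = card (NN (Suc m))"
proof -
  have fin: "finite (NN m')" for m' using finPhi by (auto simp: NN_def)
  have inv1: "ushf ` (shf ` e) = e" if "e \<in> NN m" for e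
  proof -
    have top: "k+1 \<notin> e" using NN_not_top that assms by blast
    have "ushf ` (shf ` e) = (\<lambda>x. x) ` e"
      unfolding image_image by (rule image_cong) (use top le_top[OF _ top] in \<open>auto simp: shf_def ushf_def\<close>)
    then show ?thesis by simp
  qed
  have inv2: "shf ` (ushf ` e) = e" if "e \<in> NN (Suc m)" for e
  proof -
    have bot: "0 \<notin> e" using NN_not_bot that by blast
    have "shf ` (ushf ` e) = (\<lambda>x. x) ` e"
      unfolding image_image
    proof (rule image_cong)
      fix x assume "x \<in> e"
      then have "x \<noteq> 0" using nz_mem[OF bot] by blast
      then show "shf (ushf x) = x" by (cases "x \<le> k+1") (auto simp: shf_def ushf_def)
    qed simp
    then show ?thesis by simp
  qed
  have "card (NN m) \<le> card (NN (Suc m))"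
    by (rule card_inj_on_le[of "image shf"]) (use inv1 sh_NN assms fin in \<open>auto intro: inj_on_inverseI\<close>)
  moreover have "card (NN (Suc m)) \<le> card (NN m)"
    by (rule card_inj_on_le[of "image ushf"]) (use inv2 ush_NN assms fin in \<open>auto intro: inj_on_inverseI\<close>)
  ultimately show ?thesis by simp
qed

lemma fin_mem: "e \<in> Phi \<Longrightarrow> finite e"
  unfolding Phi_def using finite_subset[of e "{..<n}"] by auto

lemma Dm_mono: "Dm (Suc m) \<subseteq> Dm m"
proof
  fix e assume e: "e \<in> Dm (Suc m)"
  have "e \<inter> {s+m..\<alpha> s} \<noteq> {}" if "s < k" for s
  proof -
    have "e \<inter> {s+Suc m..\<alpha> s} \<noteq> {}" using e that by (auto simp: Dm_def)
    moreover have "{s+Suc m..\<alpha> s} \<subseteq> {s+m..\<alpha> s}" by auto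
    ultimately show ?thesis by blast
  qed
  then show "e \<in> Dm m" by (auto simp: Dm_def)
qed

lemma Em_mono: "Em m \<subseteq> Em (Suc m)"
proof
  fix e assume e: "e \<in> Em m"
  have "e \<inter> ({\<beta> s..<n} \<union> {..s+Suc m}) \<noteq> {}" if "s < k" for s
  proof -
    have "e \<inter> ({\<beta> s..<n} \<union> {..s+m}) \<noteq> {}" using e that by (auto simp: Em_def)
    moreover have "{\<beta> s..<n} \<union> {..s+m} \<subseteq> {\<beta> s..<n} \<union> {..s+Suc m}" by auto
    ultimately show ?thesis by blast
  qed
  then show "e \<in> Em (Suc m)" by (auto simp: Em_def)
qed

definition mvD :: "nat set \<Rightarrow> nat set" where
  "mvD e = (\<lambda>x. if x = Max (e \<inter> {..k+1}) then Suc x else x) ` e"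

definition mvE :: "nat set \<Rightarrow> nat set" where
  "mvE e = (\<lambda>x. if x = Min (e \<inter> {..k+1}) then x - 1 else x) ` e"

lemma X1_struct:
  assumes "e \<in> Phi \<inter> Dm 0 - Dm 1"
  obtains s where "s < k" "s \<in> e" "e \<inter> {s+1..\<alpha> s} = {}" "Max (e \<inter> {..k+1}) = s"
proof -
  from assms obtain s where s: "s < k" "e \<inter> {s+1..\<alpha> s} = {}" by (auto simp: Dm_def)
  from assms s(1) have "e \<inter> {s..\<alpha> s} \<noteq> {}" by (auto simp: Dm_def)
  then obtain x where x: "x \<in> e" "s \<le> x" "x \<le> \<alpha> s" by auto
  have "x = s" using x s(2) by (cases "x = s") auto
  then have se: "s \<in> e" using x by simp
  have fe: "finite e" using assms fin_mem by auto
  have "Max (e \<inter> {..k+1}) = s"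
  proof (rule Max_eqI)
    show "finite (e \<inter> {..k+1})" using fe by simp
    show "s \<in> e \<inter> {..k+1}" using se s(1) by simp
    fix y assume y: "y \<in> e \<inter> {..k+1}"
    show "y \<le> s"
    proof (rule ccontr)
      assume "\<not> y \<le> s"
      then have "y \<in> {s+1..\<alpha> s}" using y alpha[OF s(1)] by auto
      then show False using y s(2) by blast
    qed
  qed
  then show ?thesis using that s se by blast
qed

lemma mvD_props:
  assumes "e \<in> Phi \<inter> Dm 0 - Dm 1" "s < k" "s \<in> e" "e \<inter> {s+1..\<alpha> s} = {}" "Max (e \<inter> {..k+1}) = s"
  shows "mvD e \<in> Phi \<inter> Dm 1 - Dm 2" "Max (mvD e \<inter> {..k+1}) = Suc s" "s \<notin> mvD e"
    "mvD e = insert (Suc s) (e - {s})"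
proof -
  have fe: "finite e" using assms fin_mem by auto
  have eP: "e \<in> Phi" using assms by auto
  have sn: "Suc s \<notin> e" using assms(4) alpha[OF assms(2)] assms(2) by auto
  have eq: "mvD e = insert (Suc s) (e - {s})"
    unfolding mvD_def assms(5) using assms(3) by auto
  show "mvD e = insert (Suc s) (e - {s})" by (rule eq)
  show "s \<notin> mvD e" unfolding eq by simp
  have inj: "inj_on (\<lambda>x. if x = s then Suc x else x) e"
    using sn by (auto simp: inj_on_def)
  have P: "mvD e \<in> Phi"
  proof (rule Phi_modify[OF eP])
    show "mvD e \<subseteq> {..<n}" unfolding eq using eP kn assms(2) by (auto simp: Phi_def)
    show "card (mvD e) = r" unfolding mvD_def assms(5) using card_image[OF inj] eP by (auto simp: Phi_def)
    show "x \<in> mvD e" if "x \<in> e" "k + 1 < x" for x using that assms(2) unfolding eq by auto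
    show "mvD e \<inter> {..k+1} \<noteq> {}" unfolding eq using assms(2) by auto
  qed
  have D1: "mvD e \<in> Dm 1"
    unfolding Dm_def
  proof (intro CollectI allI impI)
    fix s' assume s': "s' < k"
    show "mvD e \<inter> {s' + 1..\<alpha> s'} \<noteq> {}"
    proof (cases "s' \<le> s")
      case True
      then have "Suc s \<in> mvD e \<inter> {s' + 1..\<alpha> s'}" unfolding eq using alpha[OF s'] assms(2) by auto
      then show ?thesis by blast
    next
      case False
      have "e \<inter> {s'..\<alpha> s'} \<noteq> {}" using assms(1) s' by (auto simp: Dm_def)
      then obtain x where x: "x \<in> e" "s' \<le> x" "x \<le> \<alpha> s'" by auto
      have "x \<noteq> s'"
      proof
        assume "x = s'"
        then have "x \<in> {s+1..\<alpha> s}" using False alpha[OF assms(2)] s' by auto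
        then show False using x(1) assms(4) by blast
      qed
      then have "x \<in> mvD e \<inter> {s' + 1..\<alpha> s'}" unfolding eq using x False by auto
      then show ?thesis by blast
    qed
  qed
  have D2: "mvD e \<notin> Dm 2"
  proof
    assume "mvD e \<in> Dm 2"
    then have "mvD e \<inter> {s + 2..\<alpha> s} \<noteq> {}" using assms(2) by (auto simp: Dm_def)
    then obtain x where x: "x \<in> mvD e" "s+2 \<le> x" "x \<le> \<alpha> s" by auto
    then have "x \<in> e" "x \<in> {s+1..\<alpha> s}" unfolding eq by auto
    then show False using assms(4) by blast
  qed
  show "mvD e \<in> Phi \<inter> Dm 1 - Dm 2" using P D1 D2 by blast
  show "Max (mvD e \<inter> {..k+1}) = Suc s"
  proof (rule Max_eqI)
    show "finite (mvD e \<inter> {..k+1})" unfolding eq using fe by simp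
    show "Suc s \<in> mvD e \<inter> {..k+1}" unfolding eq using assms(2) by simp
    fix y assume y: "y \<in> mvD e \<inter> {..k+1}"
    show "y \<le> Suc s"
    proof (cases "y = Suc s")
      case False
      then have "y \<in> e \<inter> {..k+1}" using y unfolding eq by auto
      then have "y \<le> Max (e \<inter> {..k+1})" using fe by (intro Max_ge) simp_all
      then have "y \<le> s" using assms(5) by simp
      then show ?thesis by simp
    qed simp
  qed
qed

lemma D_ineq: "card (Phi \<inter> Dm 0 - Dm 1) \<le> card (Phi \<inter> Dm 1 - Dm 2)"
  and D_strict: "w \<in> Phi \<inter> Dm 1 - Dm 2 \<Longrightarrow> Max (w \<inter> {..k+1}) = Suc u \<Longrightarrow> u \<in> w
     \<Longrightarrow> card (Phi \<inter> Dm 0 - Dm 1) < card (Phi \<inter> Dm 1 - Dm 2)"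
proof -
  have fin: "finite (Phi \<inter> Dm 1 - Dm 2)" using finPhi by auto
  have inj: "inj_on mvD (Phi \<inter> Dm 0 - Dm 1)"
  proof (rule inj_onI)
    fix e1 e2 assume e: "e1 \<in> Phi \<inter> Dm 0 - Dm 1" "e2 \<in> Phi \<inter> Dm 0 - Dm 1" "mvD e1 = mvD e2"
    obtain s1 where s1: "s1 < k" "s1 \<in> e1" "e1 \<inter> {s1+1..\<alpha> s1} = {}" "Max (e1 \<inter> {..k+1}) = s1"
      using X1_struct[OF e(1)] by blast
    obtain s2 where s2: "s2 < k" "s2 \<in> e2" "e2 \<inter> {s2+1..\<alpha> s2} = {}" "Max (e2 \<inter> {..k+1}) = s2"
      using X1_struct[OF e(2)] by blast
    note p1 = mvD_props[OF e(1) s1] and p2 = mvD_props[OF e(2) s2]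
    have "s1 = s2" using p1(2) p2(2) e(3) by simp
    have sn1: "Suc s1 \<notin> e1" using s1(3) alpha[OF s1(1)] s1(1) by auto
    have sn2: "Suc s2 \<notin> e2" using s2(3) alpha[OF s2(1)] s2(1) by auto
    have A: "e1 = insert s1 (mvD e1 - {Suc s1})" unfolding p1(4) using s1(2) sn1 by auto
    have B: "e2 = insert s2 (mvD e2 - {Suc s2})" unfolding p2(4) using s2(2) sn2 by auto
    show "e1 = e2" by (subst A, subst B) (simp only: e(3) \<open>s1 = s2\<close>)
  qed
  have img: "mvD ` (Phi \<inter> Dm 0 - Dm 1) \<subseteq> Phi \<inter> Dm 1 - Dm 2"
  proof
    fix y assume "y \<in> mvD ` (Phi \<inter> Dm 0 - Dm 1)"
    then obtain e where e: "e \<in> Phi \<inter> Dm 0 - Dm 1" "y = mvD e" by blast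
    obtain s where "s < k" "s \<in> e" "e \<inter> {s+1..\<alpha> s} = {}" "Max (e \<inter> {..k+1}) = s"
      using X1_struct[OF e(1)] by blast
    then show "y \<in> Phi \<inter> Dm 1 - Dm 2" using mvD_props(1)[OF e(1)] e(2) by blast
  qed
  show "card (Phi \<inter> Dm 0 - Dm 1) \<le> card (Phi \<inter> Dm 1 - Dm 2)"
    using card_inj_on_le[OF inj img fin] .
  assume w: "w \<in> Phi \<inter> Dm 1 - Dm 2" "Max (w \<inter> {..k+1}) = Suc u" "u \<in> w"
  have img2: "mvD ` (Phi \<inter> Dm 0 - Dm 1) \<subseteq> (Phi \<inter> Dm 1 - Dm 2) - {w}"
  proof
    fix y assume "y \<in> mvD ` (Phi \<inter> Dm 0 - Dm 1)"
    then obtain e where e: "e \<in> Phi \<inter> Dm 0 - Dm 1" "y = mvD e" by blast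
    obtain s where s: "s < k" "s \<in> e" "e \<inter> {s+1..\<alpha> s} = {}" "Max (e \<inter> {..k+1}) = s"
      using X1_struct[OF e(1)] by blast
    note p = mvD_props[OF e(1) s]
    have "y \<noteq> w"
    proof
      assume "y = w"
      then have "u = s" using p(2) w(2) e(2) by simp
      then show False using p(3) w(3) \<open>y = w\<close> e(2) by simp
    qed
    then show "y \<in> (Phi \<inter> Dm 1 - Dm 2) - {w}" using p(1) e(2) by blast
  qed
  have "card (Phi \<inter> Dm 0 - Dm 1) \<le> card ((Phi \<inter> Dm 1 - Dm 2) - {w})"
    using card_inj_on_le[OF inj img2] fin by simp
  also have "\<dots> < card (Phi \<inter> Dm 1 - Dm 2)"
    using card_Diff1_less[OF fin w(1)] .
  finally show "card (Phi \<inter> Dm 0 - Dm 1) < card (Phi \<inter> Dm 1 - Dm 2)" .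
qed

lemma Y2_struct:
  assumes "e \<in> Phi \<inter> Em 2 - Em 1"
  obtains t where "t < k" "Suc (Suc t) \<in> e" "e \<inter> ({\<beta> t..<n} \<union> {..t+1}) = {}"
    "Min (e \<inter> {..k+1}) = Suc (Suc t)"
proof -
  from assms obtain t where t: "t < k" "e \<inter> ({\<beta> t..<n} \<union> {..t+1}) = {}" by (auto simp: Em_def)
  from assms t(1) have "e \<inter> ({\<beta> t..<n} \<union> {..t+2}) \<noteq> {}" by (auto simp: Em_def)
  then obtain x where x: "x \<in> e" "x \<in> {\<beta> t..<n} \<union> {..t+2}" by blast
  have "x \<notin> {\<beta> t..<n} \<union> {..t+1}" using x(1) t(2) by blast
  then have "x = Suc (Suc t)" using x(2) by auto
  then have se: "Suc (Suc t) \<in> e" using x by simp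
  have fe: "finite e" using assms fin_mem by auto
  have "Min (e \<inter> {..k+1}) = Suc (Suc t)"
  proof (rule Min_eqI)
    show "finite (e \<inter> {..k+1})" using fe by simp
    show "Suc (Suc t) \<in> e \<inter> {..k+1}" using se t(1) by simp
    fix y assume y: "y \<in> e \<inter> {..k+1}"
    show "Suc (Suc t) \<le> y"
    proof (rule ccontr)
      assume "\<not> Suc (Suc t) \<le> y"
      then have "y \<in> {\<beta> t..<n} \<union> {..t+1}" by auto
      then show False using y t(2) by blast
    qed
  qed
  then show ?thesis using that t se by blast
qed

lemma mvE_props:
  assumes "e \<in> Phi \<inter> Em 2 - Em 1" "t < k" "Suc (Suc t) \<in> e" "e \<inter> ({\<beta> t..<n} \<union> {..t+1}) = {}"
    "Min (e \<inter> {..k+1}) = Suc (Suc t)"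
  shows "mvE e \<in> Phi \<inter> Em 1 - Em 0" "Min (mvE e \<inter> {..k+1}) = Suc t" "Suc (Suc t) \<notin> mvE e"
    "mvE e = insert (Suc t) (e - {Suc (Suc t)})"
proof -
  have fe: "finite e" using assms fin_mem by auto
  have eP: "e \<in> Phi" using assms by auto
  have sn: "Suc t \<notin> e" using assms(4) by auto
  have eq: "mvE e = insert (Suc t) (e - {Suc (Suc t)})"
    unfolding mvE_def assms(5) using assms(3) by auto
  show "mvE e = insert (Suc t) (e - {Suc (Suc t)})" by (rule eq)
  show "Suc (Suc t) \<notin> mvE e" unfolding eq by simp
  have inj: "inj_on (\<lambda>x. if x = Suc (Suc t) then x - 1 else x) e"
    using sn by (auto simp: inj_on_def)
  have P: "mvE e \<in> Phi"
  proof (rule Phi_modify[OF eP])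
    show "mvE e \<subseteq> {..<n}" unfolding eq using eP kn assms(2) by (auto simp: Phi_def)
    show "card (mvE e) = r" unfolding mvE_def assms(5) using card_image[OF inj] eP by (auto simp: Phi_def)
    show "x \<in> mvE e" if "x \<in> e" "k + 1 < x" for x using that assms(2) unfolding eq by auto
    show "mvE e \<inter> {..k+1} \<noteq> {}" unfolding eq using assms(2) by auto
  qed
  have E1: "mvE e \<in> Em 1"
    unfolding Em_def
  proof (intro CollectI allI impI)
    fix t' assume t': "t' < k"
    show "mvE e \<inter> ({\<beta> t'..<n} \<union> {..t' + 1}) \<noteq> {}"
    proof (cases "t \<le> t'")
      case True
      then have "Suc t \<in> mvE e \<inter> ({\<beta> t'..<n} \<union> {..t' + 1})" unfolding eq by auto
      then show ?thesis by blast
    next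
      case False
      have "e \<inter> ({\<beta> t'..<n} \<union> {..t'+2}) \<noteq> {}" using assms(1) t' by (auto simp: Em_def)
      then obtain x where x: "x \<in> e" "x \<in> {\<beta> t'..<n} \<union> {..t'+2}" by blast
      have xn: "x \<notin> {..t+1}" using x(1) assms(4) by blast
      then have "x \<noteq> Suc (Suc t) \<and> x \<in> {\<beta> t'..<n}" using x(2) False beta[OF t'] assms(2) by auto
      then have "x \<in> mvE e \<inter> ({\<beta> t'..<n} \<union> {..t' + 1})" unfolding eq using x by auto
      then show ?thesis by blast
    qed
  qed
  have E0: "mvE e \<notin> Em 0"
  proof
    assume "mvE e \<in> Em 0"
    then have "mvE e \<inter> ({\<beta> t..<n} \<union> {..t+0}) \<noteq> {}" using assms(2) by (auto simp: Em_def)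
    then obtain x where x: "x \<in> mvE e" "x \<in> {\<beta> t..<n} \<union> {..t}" by (auto simp del: atLeastLessThan_iff atMost_iff Un_iff)
    have "Suc t \<notin> {\<beta> t..<n} \<union> {..t}" using beta[OF assms(2)] assms(2) by auto
    then have "x \<in> e" "x \<in> {\<beta> t..<n} \<union> {..t+1}" using x unfolding eq by auto
    then show False using assms(4) by blast
  qed
  show "mvE e \<in> Phi \<inter> Em 1 - Em 0" using P E1 E0 by blast
  show "Min (mvE e \<inter> {..k+1}) = Suc t"
  proof (rule Min_eqI)
    show "finite (mvE e \<inter> {..k+1})" unfolding eq using fe by simp
    show "Suc t \<in> mvE e \<inter> {..k+1}" unfolding eq using assms(2) by simp
    fix y assume y: "y \<in> mvE e \<inter> {..k+1}"
    show "Suc t \<le> y"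
    proof (cases "y = Suc t")
      case False
      then have "y \<in> e \<inter> {..k+1}" using y unfolding eq by auto
      then have "Min (e \<inter> {..k+1}) \<le> y" using fe by (intro Min_le) simp_all
      then show ?thesis using assms(5) by simp
    qed simp
  qed
qed

lemma E_ineq: "card (Phi \<inter> Em 2 - Em 1) \<le> card (Phi \<inter> Em 1 - Em 0)"
  and E_strict: "w \<in> Phi \<inter> Em 1 - Em 0 \<Longrightarrow> Min (w \<inter> {..k+1}) = u \<Longrightarrow> Suc u \<in> w
     \<Longrightarrow> card (Phi \<inter> Em 2 - Em 1) < card (Phi \<inter> Em 1 - Em 0)"
proof -
  have fin: "finite (Phi \<inter> Em 1 - Em 0)" using finPhi by auto
  have inj: "inj_on mvE (Phi \<inter> Em 2 - Em 1)"
  proof (rule inj_onI)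
    fix e1 e2 assume e: "e1 \<in> Phi \<inter> Em 2 - Em 1" "e2 \<in> Phi \<inter> Em 2 - Em 1" "mvE e1 = mvE e2"
    obtain s1 where s1: "s1 < k" "Suc (Suc s1) \<in> e1" "e1 \<inter> ({\<beta> s1..<n} \<union> {..s1+1}) = {}"
      "Min (e1 \<inter> {..k+1}) = Suc (Suc s1)"
      using Y2_struct[OF e(1)] by blast
    obtain s2 where s2: "s2 < k" "Suc (Suc s2) \<in> e2" "e2 \<inter> ({\<beta> s2..<n} \<union> {..s2+1}) = {}"
      "Min (e2 \<inter> {..k+1}) = Suc (Suc s2)"
      using Y2_struct[OF e(2)] by blast
    note p1 = mvE_props[OF e(1) s1] and p2 = mvE_props[OF e(2) s2]
    have "s1 = s2" using p1(2) p2(2) e(3) by simp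
    have sn1: "Suc s1 \<notin> e1" using s1(3) by auto
    have sn2: "Suc s2 \<notin> e2" using s2(3) by auto
    have A: "e1 = insert (Suc (Suc s1)) (mvE e1 - {Suc s1})" unfolding p1(4) using s1(2) sn1 by auto
    have B: "e2 = insert (Suc (Suc s2)) (mvE e2 - {Suc s2})" unfolding p2(4) using s2(2) sn2 by auto
    show "e1 = e2" by (subst A, subst B) (simp only: e(3) \<open>s1 = s2\<close>)
  qed
  have img: "mvE ` (Phi \<inter> Em 2 - Em 1) \<subseteq> Phi \<inter> Em 1 - Em 0"
  proof
    fix y assume "y \<in> mvE ` (Phi \<inter> Em 2 - Em 1)"
    then obtain e where e: "e \<in> Phi \<inter> Em 2 - Em 1" "y = mvE e" by blast
    obtain s where s: "s < k" "Suc (Suc s) \<in> e" "e \<inter> ({\<beta> s..<n} \<union> {..s+1}) = {}"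
      "Min (e \<inter> {..k+1}) = Suc (Suc s)"
      using Y2_struct[OF e(1)] by blast
    show "y \<in> Phi \<inter> Em 1 - Em 0" using mvE_props(1)[OF e(1) s] e(2) by blast
  qed
  show "card (Phi \<inter> Em 2 - Em 1) \<le> card (Phi \<inter> Em 1 - Em 0)"
    using card_inj_on_le[OF inj img fin] .
  assume w: "w \<in> Phi \<inter> Em 1 - Em 0" "Min (w \<inter> {..k+1}) = u" "Suc u \<in> w"
  have img2: "mvE ` (Phi \<inter> Em 2 - Em 1) \<subseteq> (Phi \<inter> Em 1 - Em 0) - {w}"
  proof
    fix y assume "y \<in> mvE ` (Phi \<inter> Em 2 - Em 1)"
    then obtain e where e: "e \<in> Phi \<inter> Em 2 - Em 1" "y = mvE e" by blast
    obtain s where s: "s < k" "Suc (Suc s) \<in> e" "e \<inter> ({\<beta> s..<n} \<union> {..s+1}) = {}"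
      "Min (e \<inter> {..k+1}) = Suc (Suc s)"
      using Y2_struct[OF e(1)] by blast
    note p = mvE_props[OF e(1) s]
    have "y \<noteq> w"
    proof
      assume "y = w"
      then have "u = Suc s" using p(2) w(2) e(2) by simp
      then show False using p(3) w(3) \<open>y = w\<close> e(2) by simp
    qed
    then show "y \<in> (Phi \<inter> Em 1 - Em 0) - {w}" using p(1) e(2) by blast
  qed
  have "card (Phi \<inter> Em 2 - Em 1) \<le> card ((Phi \<inter> Em 1 - Em 0) - {w})"
    using card_inj_on_le[OF inj img2] fin by simp
  also have "\<dots> < card (Phi \<inter> Em 1 - Em 0)"
    using card_Diff1_less[OF fin w(1)] .
  finally show "card (Phi \<inter> Em 2 - Em 1) < card (Phi \<inter> Em 1 - Em 0)" .
qed

lemma card_split_D: "card (Phi - Dm (Suc m)) = card (Phi - Dm m) + card (Phi \<inter> Dm m - Dm (Suc m))"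
proof -
  have "Phi - Dm (Suc m) = (Phi - Dm m) \<union> (Phi \<inter> Dm m - Dm (Suc m))" using Dm_mono[of m] by blast
  moreover have "(Phi - Dm m) \<inter> (Phi \<inter> Dm m - Dm (Suc m)) = {}" by blast
  ultimately show ?thesis using finPhi by (simp add: card_Un_disjoint)
qed

lemma card_split_E: "card (Phi - Em m) = card (Phi - Em (Suc m)) + card (Phi \<inter> Em (Suc m) - Em m)"
proof -
  have "Phi - Em m = (Phi - Em (Suc m)) \<union> (Phi \<inter> Em (Suc m) - Em m)" using Em_mono[of m] by blast
  moreover have "(Phi - Em (Suc m)) \<inter> (Phi \<inter> Em (Suc m) - Em m) = {}" by blast
  ultimately show ?thesis using finPhi by (simp add: card_Un_disjoint)
qed

lemma core_main: "card (G 0) + card (G 2) \<le> 2 * card (G 1)"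
  and core_strict: "(\<exists>w u. w \<in> Phi \<inter> Dm 1 - Dm 2 \<and> Max (w \<inter> {..k+1}) = Suc u \<and> u \<in> w) \<or>
      (\<exists>w u. w \<in> Phi \<inter> Em 1 - Em 0 \<and> Min (w \<inter> {..k+1}) = u \<and> Suc u \<in> w) \<Longrightarrow>
      card (G 0) + card (G 2) < 2 * card (G 1)"
proof -
  have g0: "card (G 0) + card (Phi - Dm 0) + card (Phi - Em 0) = card Phi + card (NN 0)" by (rule card_G)
  have g1: "card (G 1) + card (Phi - Dm 1) + card (Phi - Em 1) = card Phi + card (NN 1)" by (rule card_G)
  have g2: "card (G 2) + card (Phi - Dm 2) + card (Phi - Em 2) = card Phi + card (NN 2)" by (rule card_G)
  have n01: "card (NN 0) = card (NN 1)" using card_NN[of 0] by simp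
  have n12: "card (NN 1) = card (NN 2)" using card_NN[of 1] by (simp add: numeral_2_eq_2)
  have d1: "card (Phi - Dm 1) = card (Phi - Dm 0) + card (Phi \<inter> Dm 0 - Dm 1)" using card_split_D[of 0] by simp
  have d2: "card (Phi - Dm 2) = card (Phi - Dm 1) + card (Phi \<inter> Dm 1 - Dm 2)" using card_split_D[of 1] by (simp add: numeral_2_eq_2)
  have e0: "card (Phi - Em 0) = card (Phi - Em 1) + card (Phi \<inter> Em 1 - Em 0)" using card_split_E[of 0] by simp
  have e1: "card (Phi - Em 1) = card (Phi - Em 2) + card (Phi \<inter> Em 2 - Em 1)" using card_split_E[of 1] by (simp add: numeral_2_eq_2)
  note di = D_ineq and ei = E_ineq
  show "card (G 0) + card (G 2) \<le> 2 * card (G 1)" using g0 g1 g2 n01 n12 d1 d2 e0 e1 di ei by linarith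
  assume "(\<exists>w u. w \<in> Phi \<inter> Dm 1 - Dm 2 \<and> Max (w \<inter> {..k+1}) = Suc u \<and> u \<in> w) \<or>
      (\<exists>w u. w \<in> Phi \<inter> Em 1 - Em 0 \<and> Min (w \<inter> {..k+1}) = u \<and> Suc u \<in> w)"
  then have "card (Phi \<inter> Dm 0 - Dm 1) < card (Phi \<inter> Dm 1 - Dm 2) \<or>
     card (Phi \<inter> Em 2 - Em 1) < card (Phi \<inter> Em 1 - Em 0)"
    using D_strict E_strict by blast
  then show "card (G 0) + card (G 2) < 2 * card (G 1)"
    using g0 g1 g2 n01 n12 d1 d2 e0 e1 di ei by linarith
qed

lemma witD:
  assumes wfx: "\<And>f. f \<in> Fx \<Longrightarrow> {..k+1} \<subseteq> f \<or> (\<gamma> \<in> f \<and> \<delta> \<in> f)"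
    and g: "\<alpha> 0 < \<gamma>" "\<gamma> < n" "\<And>s. 1 \<le> s \<Longrightarrow> s < k \<Longrightarrow> \<gamma> \<le> \<alpha> s"
    and r3: "3 \<le> r" and room: "r - 3 \<le> card ({\<alpha> 0<..<n} - {\<gamma>})"
  shows "\<exists>w u. w \<in> Phi \<inter> Dm 1 - Dm 2 \<and> Max (w \<inter> {..k+1}) = Suc u \<and> u \<in> w"
proof -
  obtain pad where pad: "pad \<subseteq> {\<alpha> 0<..<n} - {\<gamma>}" "card pad = r - 3" "finite pad"
    using obtain_subset_with_card_n[OF room] by blast
  have padp: "\<alpha> 0 < x \<and> x < n \<and> x \<noteq> \<gamma>" if "x \<in> pad" for x using pad(1) that by auto
  have a0: "k+1 < \<alpha> 0" "\<alpha> 0 < n" using alpha[of 0] k1 by auto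
  define w where "w = {0, 1, \<gamma>} \<union> pad"
  have c3: "card {0, 1, \<gamma>} = 3" using a0 g(1) by auto
  have disj: "{0,1,\<gamma>} \<inter> pad = {}" using padp a0 g(1) by fastforce
  have "card w = card {0,1,\<gamma>} + card pad" unfolding w_def
    by (rule card_Un_disjoint) (use pad disj in auto)
  then have cw: "card w = r" using c3 pad(2) r3 by simp
  have wP: "w \<in> Phi" unfolding Phi_def
  proof (intro CollectI conjI ballI)
    show "w \<subseteq> {..<n}"
    proof
      fix x assume "x \<in> w"
      then have "x \<in> {0,1,\<gamma>} \<or> x \<in> pad" unfolding w_def by blast
      then show "x \<in> {..<n}" using padp[of x] g a0 by auto
    qed
    show "card w = r" by (rule cw)
    fix f assume f: "f \<in> Fx"
    have "0 \<in> w" "\<gamma> \<in> w" "0 \<in> {..k+1}" unfolding w_def by auto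
    then show "w \<inter> f \<noteq> {}" using wfx[OF f] by blast
  qed
  have wD1: "w \<in> Dm 1" unfolding Dm_def
  proof (intro CollectI allI impI)
    fix s assume s: "s < k"
    show "w \<inter> {s + 1..\<alpha> s} \<noteq> {}"
    proof (cases "s = 0")
      case True
      then have "1 \<in> w \<inter> {s + 1..\<alpha> s}" unfolding w_def using a0 by auto
      then show ?thesis by blast
    next
      case False
      then have "\<gamma> \<in> w \<inter> {s + 1..\<alpha> s}" unfolding w_def using g(3)[of s] s a0 g(1) by auto
      then show ?thesis by blast
    qed
  qed
  have wD2: "w \<notin> Dm 2"
  proof
    assume "w \<in> Dm 2"
    then have "\<forall>s<k. w \<inter> {s + 2..\<alpha> s} \<noteq> {}" unfolding Dm_def by simp
    then have "w \<inter> {0 + 2..\<alpha> 0} \<noteq> {}" using k1 by simp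
    then obtain x where x0: "x \<in> w" "x \<in> {0+2..\<alpha> 0}" by blast
    then have x: "x \<in> w" "2 \<le> x" "x \<le> \<alpha> 0" by auto
    then have "x \<in> {0,1,\<gamma>} \<or> x \<in> pad" unfolding w_def by blast
    then show False using padp[of x] x g(1) by auto
  qed
  have wR: "w \<inter> {..k+1} = {0, 1}"
  proof
    show "{0, 1} \<subseteq> w \<inter> {..k+1}" unfolding w_def by auto
    show "w \<inter> {..k+1} \<subseteq> {0, 1}"
    proof
      fix x assume x: "x \<in> w \<inter> {..k+1}"
      then have "x \<in> {0,1,\<gamma>} \<or> x \<in> pad" unfolding w_def by blast
      then show "x \<in> {0, 1}" using padp[of x] x g(1) a0 by auto
    qed
  qed
  have m: "Max (w \<inter> {..k+1}) = Suc 0" unfolding wR by simp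
  have z: "0 \<in> w" unfolding w_def by simp
  have ww: "w \<in> Phi \<inter> Dm 1 - Dm 2" using wP wD1 wD2 by simp
  show ?thesis by (rule exI[of _ w], rule exI[of _ 0]) (intro conjI ww m z)
qed

lemma witE:
  assumes wfx: "\<And>f. f \<in> Fx \<Longrightarrow> {..k+1} \<subseteq> f \<or> (\<gamma> \<in> f \<and> \<delta> \<in> f)"
    and d: "k+1 < \<delta>" "\<delta> < \<beta> (k-1)" "\<And>t. t + 1 < k \<Longrightarrow> \<beta> t \<le> \<delta>"
    and r3: "3 \<le> r" and room: "r - 3 \<le> card ({k+1<..<\<beta> (k-1)} - {\<delta>})"
  shows "\<exists>w u. w \<in> Phi \<inter> Em 1 - Em 0 \<and> Min (w \<inter> {..k+1}) = u \<and> Suc u \<in> w"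
proof -
  obtain pad where pad: "pad \<subseteq> {k+1<..<\<beta> (k-1)} - {\<delta>}" "card pad = r - 3" "finite pad"
    using obtain_subset_with_card_n[OF room] by blast
  have padp: "k+1 < x \<and> x < \<beta> (k-1) \<and> x \<noteq> \<delta>" if "x \<in> pad" for x using pad(1) that by auto
  have b0: "k+1 < \<beta> (k-1)" "\<beta> (k-1) < n" using beta[of "k-1"] k1 by auto
  define w where "w = {k, k+1, \<delta>} \<union> pad"
  have c3: "card {k, k+1, \<delta>} = 3" using d(1) by auto
  have disj: "{k,k+1,\<delta>} \<inter> pad = {}" using padp by fastforce
  have "card w = card {k,k+1,\<delta>} + card pad" unfolding w_def
    by (rule card_Un_disjoint) (use pad disj in auto)
  then have cw: "card w = r" using c3 pad(2) r3 by simp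
  have wP: "w \<in> Phi" unfolding Phi_def
  proof (intro CollectI conjI ballI)
    show "w \<subseteq> {..<n}"
    proof
      fix x assume "x \<in> w"
      then have "x \<in> {k,k+1,\<delta>} \<or> x \<in> pad" unfolding w_def by blast
      then show "x \<in> {..<n}" using padp[of x] d(1,2) b0 by auto
    qed
    show "card w = r" by (rule cw)
    fix f assume f: "f \<in> Fx"
    have "k \<in> w" "\<delta> \<in> w" "k \<in> {..k+1}" unfolding w_def by auto
    then show "w \<inter> f \<noteq> {}" using wfx[OF f] by blast
  qed
  have wE1: "w \<in> Em 1" unfolding Em_def
  proof (intro CollectI allI impI)
    fix t assume t: "t < k"
    show "w \<inter> ({\<beta> t..<n} \<union> {..t + 1}) \<noteq> {}"
    proof (cases "t + 1 = k")
      case True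
      then have "k \<in> w \<inter> ({\<beta> t..<n} \<union> {..t + 1})" unfolding w_def by auto
      then show ?thesis by blast
    next
      case False
      then have "\<delta> \<in> w \<inter> ({\<beta> t..<n} \<union> {..t + 1})" unfolding w_def using d(3)[of t] t d(2) b0 by auto
      then show ?thesis by blast
    qed
  qed
  have wE0: "w \<notin> Em 0"
  proof
    assume "w \<in> Em 0"
    then have "\<forall>s<k. w \<inter> ({\<beta> s..<n} \<union> {..s+0}) \<noteq> {}" unfolding Em_def by simp
    then have "w \<inter> ({\<beta> (k-1)..<n} \<union> {..(k-1)+0}) \<noteq> {}" using k1 by simp
    then obtain x where x: "x \<in> w" "x \<in> {\<beta> (k-1)..<n} \<union> {..(k-1)+0}" by blast
    then have "x \<in> {k,k+1,\<delta>} \<or> x \<in> pad" unfolding w_def by blast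
    then show False using padp[of x] x(2) d(1,2) b0 k1 by auto
  qed
  have wR: "w \<inter> {..k+1} = {k, k+1}"
  proof
    show "{k, k+1} \<subseteq> w \<inter> {..k+1}" unfolding w_def by auto
    show "w \<inter> {..k+1} \<subseteq> {k, k+1}"
    proof
      fix x assume x: "x \<in> w \<inter> {..k+1}"
      then have "x \<in> {k,k+1,\<delta>} \<or> x \<in> pad" unfolding w_def by blast
      then show "x \<in> {k, k+1}" using padp[of x] x d(1) by auto
    qed
  qed
  have m: "Min (w \<inter> {..k+1}) = k" unfolding wR by simp
  have z: "Suc k \<in> w" unfolding w_def by simp
  have ww: "w \<in> Phi \<inter> Em 1 - Em 0" using wP wE1 wE0 by simp
  show ?thesis by (rule exI[of _ w], rule exI[of _ k]) (intro conjI ww m z)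
qed

lemma core_strict2:
  assumes wfx: "\<And>f. f \<in> Fx \<Longrightarrow> {..k+1} \<subseteq> f \<or> (\<gamma> \<in> f \<and> \<delta> \<in> f)"
    and g: "\<alpha> 0 < \<gamma>" "\<gamma> < n" "\<And>s. 1 \<le> s \<Longrightarrow> s < k \<Longrightarrow> \<gamma> \<le> \<alpha> s"
    and d: "k+1 < \<delta>" "\<delta> < \<beta> (k-1)" "\<And>t. t + 1 < k \<Longrightarrow> \<beta> t \<le> \<delta>"
    and ab: "\<alpha> 0 + k \<le> \<beta> (k-1)"
    and r3: "3 \<le> r" and nr: "3*r - 5 \<le> n"
  shows "card (G 0) + card (G 2) < 2 * card (G 1)"
proof -
  have a0: "k+1 < \<alpha> 0" "\<alpha> 0 < n" using alpha[of 0] k1 by auto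
  have cD: "card ({\<alpha> 0<..<n} - {\<gamma>}) = n - \<alpha> 0 - 2"
    using g a0 by (simp add: card_Diff_singleton)
  have cE: "card ({k+1<..<\<beta> (k-1)} - {\<delta>}) = \<beta> (k-1) - k - 3"
    using d by (simp add: card_Diff_singleton)
  have "r - 3 \<le> card ({\<alpha> 0<..<n} - {\<gamma>}) \<or> r - 3 \<le> card ({k+1<..<\<beta> (k-1)} - {\<delta>})"
    unfolding cD cE using a0 d ab r3 nr g by linarith
  then show ?thesis
  proof
    assume "r - 3 \<le> card ({\<alpha> 0<..<n} - {\<gamma>})"
    from witD[OF wfx g r3 this] show ?thesis by (intro core_strict) (rule disjI1)
  next
    assume "r - 3 \<le> card ({k+1<..<\<beta> (k-1)} - {\<delta>})"
    from witE[OF wfx d r3 this] show ?thesis by (intro core_strict) (rule disjI2)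
  qed
qed

end



lemma idx_eq_iff: "idx l p = idx l q \<longleftrightarrow> int (2*l+1) dvd (p - q)"
proof -
  have M: "int (2*l+1) > 0" by simp
  have "idx l p = idx l q \<longleftrightarrow> nat ((p-1) mod int (2*l+1)) = nat ((q-1) mod int (2*l+1))"
    unfolding idx_def by simp
  also have "\<dots> \<longleftrightarrow> (p-1) mod int (2*l+1) = (q-1) mod int (2*l+1)"
    using M by (simp add: eq_nat_nat_iff)
  also have "\<dots> \<longleftrightarrow> int (2*l+1) dvd ((p-1) - (q-1))" by (rule mod_eq_dvd_iff)
  finally show ?thesis by simp
qed

lemma wt_cong: "int (2*l+1) dvd (p - q) \<Longrightarrow> wt l C p = wt l C q"
  unfolding wt_def using idx_eq_iff by metis

lemma idx_range: "1 \<le> idx l p \<and> idx l p \<le> 2*l+1"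
proof -
  have "(p-1) mod int (2*l+1) < int (2*l+1)" by simp
  then show ?thesis unfolding idx_def by linarith
qed

lemma idx_id: assumes "1 \<le> q" "q \<le> 2*l+1" shows "idx l (int q) = q"
proof -
  have "(int q - 1) mod int (2*l+1) = int q - 1" using assms by (intro mod_pos_pos_trivial) auto
  then show ?thesis unfolding idx_def using assms by simp
qed

lemma dvd_small: assumes "int N dvd x" "\<bar>x\<bar> < int N" shows "x = 0"
proof (rule ccontr)
  assume "x \<noteq> 0"
  then have "\<bar>int N\<bar> \<le> \<bar>x\<bar>" using dvd_imp_le_int assms(1) by blast
  then show False using assms(2) by simp
qed

lemma odd_cancel: assumes "int (2*l+1) dvd 2*x" shows "int (2*l+1) dvd x"
proof -
  have "int (2*l+1) dvd (int l+1) * (2*x)" using assms by simp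
  moreover have "(int l+1) * (2*x) = x + int (2*l+1) * x" by (simp add: algebra_simps)
  ultimately have "int (2*l+1) dvd x + int (2*l+1) * x" by simp
  then show ?thesis by (simp add: dvd_add_left_iff)
qed

lemma cong_small: assumes "int (2*l+1) dvd 2*(int a - int b)" "a < 2*l+1" "b < 2*l+1"
  shows "a = b"
proof -
  have "int (2*l+1) dvd (int a - int b)" using odd_cancel assms(1) by blast
  then have "int a - int b = 0" using assms(2,3) by (intro dvd_small[of "2*l+1"]) auto
  then show ?thesis by simp
qed

definition LL :: "nat \<Rightarrow> (nat \<Rightarrow> nat) \<Rightarrow> nat list" where
  "LL l C = map (\<lambda>t. C (2*t+1)) [0..<l+1] @ map (\<lambda>t. C (2*t+2)) [0..<l]"

lemma set_LL: "set (LL l C) = C ` {1..2*l+1}"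
proof -
  have AB: "(\<lambda>t. 2*t+1) ` {0..<l+1} \<union> (\<lambda>t. 2*t+2) ` {0..<l} = {1..2*l+1}"
  proof
    show "(\<lambda>t. 2*t+1) ` {0..<l+1} \<union> (\<lambda>t. 2*t+2) ` {0..<l} \<subseteq> {1..2*l+1}" by auto
    show "{1..2*l+1} \<subseteq> (\<lambda>t. 2*t+1) ` {0..<l+1} \<union> (\<lambda>t. 2*t+2) ` {0..<l}"
    proof
      fix x assume x: "x \<in> {1..2*l+1}"
      show "x \<in> (\<lambda>t. 2*t+1) ` {0..<l+1} \<union> (\<lambda>t. 2*t+2) ` {0..<l}"
      proof (cases "even x")
        case True
        then obtain y where y: "x = 2*y" by (rule evenE)
        then have "y \<ge> 1" "y - 1 < l" using x by auto
        then have "x = 2*(y-1)+2" "y - 1 \<in> {0..<l}" using y by auto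
        then show ?thesis by blast
      next
        case False
        then obtain y where y: "x = 2*y+1" by (rule oddE)
        then have "y \<in> {0..<l+1}" using x by auto
        then show ?thesis using y by blast
      qed
    qed
  qed
  have "set (LL l C) = (\<lambda>t. C (2*t+1)) ` {0..<l+1} \<union> (\<lambda>t. C (2*t+2)) ` {0..<l}"
    unfolding LL_def by (simp del: upt_Suc)
  also have "\<dots> = C ` ((\<lambda>t. 2*t+1) ` {0..<l+1} \<union> (\<lambda>t. 2*t+2) ` {0..<l})"
    by (simp only: image_Un image_image)
  finally have "set (LL l C) = C ` ((\<lambda>t. 2*t+1) ` {0..<l+1} \<union> (\<lambda>t. 2*t+2) ` {0..<l})" .
  then show ?thesis using AB by simp
qed

lemma length_LL: "length (LL l C) = 2*l+1" unfolding LL_def by simp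

lemma sv_inj: assumes "semi_valid n l C"
  shows "inj_on C {1..2*l+1}" "C ` {1..2*l+1} \<subseteq> {..<n}"
proof -
  have sv: "cyc_ordered n (LL l C)" using assms unfolding semi_valid_def LL_def by simp
  then have d: "distinct (LL l C)" and s: "set (LL l C) \<subseteq> {..<n}" unfolding cyc_ordered_def by auto
  show "C ` {1..2*l+1} \<subseteq> {..<n}" using s set_LL by metis
  have "card (C ` {1..2*l+1}) = 2*l+1" using distinct_card[OF d] set_LL length_LL by metis
  then show "inj_on C {1..2*l+1}" by (intro eq_card_imp_inj_on) auto
qed

lemma LL_nth: assumes "t < 2*l+1" shows "LL l C ! t = wt l C (int (1 + 2*t))"
proof (cases "t \<le> l")
  case True
  then have "LL l C ! t = C (2*t+1)" unfolding LL_def by (simp add: nth_append del: upt_Suc)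
  moreover have "idx l (int (1+2*t)) = 2*t+1" using idx_id[of "1+2*t" l] True by simp
  ultimately show ?thesis unfolding wt_def by simp
next
  case False
  have "t - (l+1) < l" using assms False by auto
  then have "LL l C ! t = C (2*(t-(l+1))+2)" unfolding LL_def using assms False by (simp add: nth_append del: upt_Suc)
  moreover have "2*(t-(l+1))+2 = 2*t - 2*l" using False by simp
  moreover have "idx l (int (1+2*t)) = idx l (int (2*t - 2*l))"
    using False by (subst idx_eq_iff) (simp add: of_nat_diff)
  moreover have "idx l (int (2*t - 2*l)) = 2*t - 2*l" using False assms by (intro idx_id) auto
  ultimately show ?thesis unfolding wt_def by simp
qed

lemma sv_order: assumes "semi_valid n l C" "t < s" "s < 2*l+1"
  shows "cwd n (C 1) (wt l C (int (1+2*t))) < cwd n (C 1) (wt l C (int (1+2*s)))"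
proof -
  have sv: "cyc_ordered n (LL l C)" using assms unfolding semi_valid_def LL_def by simp
  have "LL l C ! 0 = C 1" unfolding LL_def by (simp add: nth_append del: upt_Suc)
  moreover have "cwd n (LL l C ! 0) (LL l C ! t) < cwd n (LL l C ! 0) (LL l C ! s)"
    using sv assms(2,3) length_LL[of l C] unfolding cyc_ordered_def by auto
  ultimately show ?thesis using LL_nth[of t l C] LL_nth[of s l C] assms(2,3) by simp
qed

lemma mod_small_neg: fixes X :: int assumes "-m \<le> X" "X < 0" shows "X mod m = X + m"
proof -
  have "X mod m = (X + m) mod m" by simp
  also have "\<dots> = X + m" using assms by (intro mod_pos_pos_trivial) auto
  finally show ?thesis .
qed

lemma rot_mono:
  fixes a :: "nat \<Rightarrow> int" and m :: int
  assumes rng: "\<And>v. v < N \<Longrightarrow> 0 \<le> a v \<and> a v < m"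
    and mono: "\<And>v w. v < w \<Longrightarrow> w < N \<Longrightarrow> a v < a w"
    and u: "u < N" and t: "t1 < t2" "t2 < N"
  shows "(a ((u+t1) mod N) - a u) mod m < (a ((u+t2) mod N) - a u) mod m"
proof -
  have au: "0 \<le> a u" "a u < m" using rng u by auto
  show ?thesis
  proof (cases "u + t2 < N")
    case True
    then have e1: "(u+t1) mod N = u+t1" "(u+t2) mod N = u+t2" using t by auto
    have "a u \<le> a (u+t1)" using mono[of u "u+t1"] True t by (cases "t1 = 0") auto
    moreover have "a (u+t1) < a (u+t2)" using mono True t by auto
    moreover have "a (u+t2) < m" using rng True by auto
    ultimately have "(a (u+t1) - a u) mod m = a (u+t1) - a u" "(a (u+t2) - a u) mod m = a (u+t2) - a u"
      using au by (auto intro: mod_pos_pos_trivial)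
    then show ?thesis unfolding e1 using \<open>a (u+t1) < a (u+t2)\<close> by simp
  next
    case False
    then have e2: "(u+t2) mod N = u+t2-N" using t u by (simp add: mod_if)
    have lt2: "u+t2-N < u" using t u False by auto
    have v2: "0 \<le> a (u+t2-N)" "a (u+t2-N) < a u" using rng[of "u+t2-N"] mono[OF lt2 u] lt2 u by auto
    have m2: "(a (u+t2-N) - a u) mod m = a (u+t2-N) - a u + m"
      using v2 au by (intro mod_small_neg) auto
    show ?thesis
    proof (cases "u + t1 < N")
      case True
      then have e1: "(u+t1) mod N = u+t1" by auto
      have "a u \<le> a (u+t1)" using mono[of u "u+t1"] True t by (cases "t1 = 0") auto
      moreover have "a (u+t1) < m" using rng True by auto
      ultimately have "(a (u+t1) - a u) mod m = a (u+t1) - a u" using au by (auto intro: mod_pos_pos_trivial)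
      then show ?thesis unfolding e1 e2 m2 using v2 \<open>a (u+t1) < m\<close> by simp
    next
      case False
      then have e1: "(u+t1) mod N = u+t1-N" using t u by (simp add: mod_if)
      have lt1: "u+t1-N < u" using t u False by auto
      have v1: "0 \<le> a (u+t1-N)" "a (u+t1-N) < a u" using rng[of "u+t1-N"] mono[OF lt1 u] lt1 u by auto
      have m1: "(a (u+t1-N) - a u) mod m = a (u+t1-N) - a u + m"
        using v1 au by (intro mod_small_neg) auto
      have "a (u+t1-N) < a (u+t2-N)" using mono[of "u+t1-N" "u+t2-N"] t False u by auto
      then show ?thesis unfolding e1 e2 m1 m2 by simp
    qed
  qed
qed

lemma cwd_rebase: assumes "0 < n"
  shows "int (cwd n b x) = (int (cwd n a x) - int (cwd n a b)) mod int n"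
proof -
  have "int (cwd n a x) = (int x - int a) mod int n" "int (cwd n a b) = (int b - int a) mod int n"
    "int (cwd n b x) = (int x - int b) mod int n"
    unfolding cwd_def using assms by auto
  moreover have "((int x - int a) mod int n - (int b - int a) mod int n) mod int n = (int x - int b) mod int n"
    by (simp add: mod_diff_eq)
  ultimately show ?thesis by simp
qed




lemma cwd_lt: "0 < n \<Longrightarrow> cwd n z x < n"
  unfolding cwd_def by (simp add: nat_less_iff)

lemma cwd_inj: assumes "0 < n" shows "inj_on (cwd n z) {..<n}"
proof (rule inj_onI)
  fix x y assume xy: "x \<in> {..<n}" "y \<in> {..<n}" "cwd n z x = cwd n z y"
  have "(int x - int z) mod int n = (int y - int z) mod int n"
    using xy(3) unfolding cwd_def using assms by (simp add: eq_nat_nat_iff)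
  then have "int n dvd ((int x - int z) - (int y - int z))" by (simp add: mod_eq_dvd_iff)
  then have "int n dvd (int x - int y)" by simp
  moreover have "\<bar>int x - int y\<bar> < int n" using xy by auto
  ultimately have "int x - int y = 0" by (rule dvd_small)
  then show "x = y" by simp
qed

lemma cwd_bij: assumes "0 < n" shows "bij_betw (cwd n z) {..<n} {..<n}"
proof -
  have "cwd n z ` {..<n} \<subseteq> {..<n}" using cwd_lt[OF assms] by auto
  then have "cwd n z ` {..<n} = {..<n}" using cwd_inj[OF assms] by (intro endo_inj_surj) auto
  then show ?thesis using cwd_inj[OF assms] unfolding bij_betw_def by simp
qed

lemma arc_cond:
  fixes a b y m :: int
  assumes "0 \<le> a" "a < m" "0 \<le> b" "b < m" "0 \<le> y" "y < m"
  shows "(y - a) mod m \<le> (b - a) mod m \<longleftrightarrow> (if a \<le> b then a \<le> y \<and> y \<le> b else a \<le> y \<or> y \<le> b)"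
proof -
  have ya: "(y - a) mod m = (if a \<le> y then y - a else y - a + m)"
    using assms by (auto intro: mod_pos_pos_trivial mod_small_neg)
  have ba: "(b - a) mod m = (if a \<le> b then b - a else b - a + m)"
    using assms by (auto intro: mod_pos_pos_trivial mod_small_neg)
  show ?thesis unfolding ya ba using assms by auto
qed

lemma cint_image:
  assumes n: "0 < n" and u: "u < n" and w: "w < n"
  shows "cwd n z ` cint n u w = (if cwd n z u \<le> cwd n z w then {cwd n z u..cwd n z w}
            else {cwd n z u..<n} \<union> {..cwd n z w})"
proof -
  let ?P = "cwd n z"
  let ?cond = "\<lambda>y. (if ?P u \<le> ?P w then ?P u \<le> y \<and> y \<le> ?P w else ?P u \<le> y \<or> y \<le> ?P w)"
  have key: "x \<in> cint n u w \<longleftrightarrow> x < n \<and> ?cond (?P x)" if x: "x < n" for x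
  proof -
    have "x \<in> cint n u w \<longleftrightarrow> int (cwd n u x) \<le> int (cwd n u w)" unfolding cint_def using x by simp
    also have "\<dots> \<longleftrightarrow> (int (?P x) - int (?P u)) mod int n \<le> (int (?P w) - int (?P u)) mod int n"
      using cwd_rebase[OF n, of u x z] cwd_rebase[OF n, of u w z] by simp
    also have "\<dots> \<longleftrightarrow> ?cond (?P x)"
      using arc_cond[of "int (?P u)" "int n" "int (?P w)" "int (?P x)"] cwd_lt[OF n] by auto
    finally show ?thesis using x by simp
  qed
  have surj: "?P ` {..<n} = {..<n}" using cwd_bij[OF n] by (simp add: bij_betw_def)
  have "?P ` cint n u w = {y. y < n \<and> ?cond y}"
  proof
    show "?P ` cint n u w \<subseteq> {y. y < n \<and> ?cond y}"
    proof
      fix y assume "y \<in> ?P ` cint n u w"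
      then obtain x where x: "x \<in> cint n u w" "y = ?P x" by auto
      have "x < n" using x(1) unfolding cint_def by simp
      then show "y \<in> {y. y < n \<and> ?cond y}" using key x cwd_lt[OF n] by auto
    qed
    show "{y. y < n \<and> ?cond y} \<subseteq> ?P ` cint n u w"
    proof
      fix y assume y: "y \<in> {y. y < n \<and> ?cond y}"
      then have "y \<in> ?P ` {..<n}" using surj by simp
      then obtain x where x: "x < n" "y = ?P x" by auto
      then have "x \<in> cint n u w" using key y by auto
      then show "y \<in> ?P ` cint n u w" using x by auto
    qed
  qed
  also have "\<dots> = (if ?P u \<le> ?P w then {?P u..?P w} else {?P u..<n} \<union> {..?P w})"
    using cwd_lt[OF n, of z w] by auto
  finally show ?thesis .
qed

lemma relabel:
  assumes f: "bij_betw f {..<n} {..<(n::nat)}" and A: "\<And>t. t \<in> T \<Longrightarrow> A t \<subseteq> {..<n}"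
  shows "card {e. e \<subseteq> {..<n} \<and> card e = r \<and> (\<forall>t\<in>T. e \<inter> A t \<noteq> {})}
       = card {E. E \<subseteq> {..<n} \<and> card E = r \<and> (\<forall>t\<in>T. E \<inter> f ` A t \<noteq> {})}"
proof -
  let ?S = "{e. e \<subseteq> {..<n} \<and> card e = r \<and> (\<forall>t\<in>T. e \<inter> A t \<noteq> {})}"
  let ?S' = "{E. E \<subseteq> {..<n} \<and> card E = r \<and> (\<forall>t\<in>T. E \<inter> f ` A t \<noteq> {})}"
  have inj: "inj_on f {..<n}" and im: "f ` {..<n} = {..<n}" using f by (auto simp: bij_betw_def)
  have meet: "e \<inter> B \<noteq> {} \<longleftrightarrow> f ` e \<inter> f ` B \<noteq> {}" if "e \<subseteq> {..<n}" "B \<subseteq> {..<n}" for e B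
  proof
    assume "e \<inter> B \<noteq> {}" then show "f ` e \<inter> f ` B \<noteq> {}" by auto
  next
    assume "f ` e \<inter> f ` B \<noteq> {}"
    then obtain x y where "x \<in> e" "y \<in> B" "f x = f y" by auto
    then have "x = y" using inj that by (auto dest: inj_onD)
    then show "e \<inter> B \<noteq> {}" using \<open>x \<in> e\<close> \<open>y \<in> B\<close> by auto
  qed
  have injS: "inj_on (image f) ?S"
  proof (rule inj_onI)
    fix e1 e2 assume "e1 \<in> ?S" "e2 \<in> ?S" "f ` e1 = f ` e2"
    then show "e1 = e2" using inj_on_image_eq_iff[OF inj] by auto
  qed
  have "image f ` ?S = ?S'"
  proof
    show "image f ` ?S \<subseteq> ?S'"
    proof
      fix E assume "E \<in> image f ` ?S"
      then obtain e where e: "e \<in> ?S" "E = f ` e" by auto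
      have "card (f ` e) = card e" using e(1) inj by (intro card_image) (auto intro: inj_on_subset)
      moreover have "f ` e \<subseteq> {..<n}" using e(1) im by blast
      ultimately show "E \<in> ?S'" using e meet A by auto
    qed
    show "?S' \<subseteq> image f ` ?S"
    proof
      fix E assume E: "E \<in> ?S'"
      define e where "e = {x. x < n \<and> f x \<in> E}"
      have ee: "f ` e = E"
      proof
        show "f ` e \<subseteq> E" unfolding e_def by auto
        show "E \<subseteq> f ` e"
        proof
          fix y assume "y \<in> E"
          then have "y \<in> f ` {..<n}" using E im by auto
          then obtain x where "x < n" "y = f x" by auto
          then show "y \<in> f ` e" unfolding e_def using \<open>y \<in> E\<close> by auto
        qed
      qed
      have es: "e \<subseteq> {..<n}" unfolding e_def by auto
      have "card (f ` e) = card e" using es inj by (intro card_image) (auto intro: inj_on_subset)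
      then have "e \<in> ?S" using E ee es meet A by auto
      then show "E \<in> image f ` ?S" using ee by auto
    qed
  qed
  then show ?thesis using card_image[OF injS] by simp
qed




lemma surj2: "\<exists>v<2*l+1. int (2*l+1) dvd (a + 2*int v - p)"
proof -
  let ?N = "2*l+1"
  have inj: "inj_on (\<lambda>v. idx l (a + 2*int v)) {..<?N}"
  proof (rule inj_onI)
    fix v w assume vw: "v \<in> {..<?N}" "w \<in> {..<?N}" "idx l (a + 2*int v) = idx l (a + 2*int w)"
    then have "int ?N dvd 2*(int v - int w)" unfolding idx_eq_iff by (simp add: algebra_simps)
    then show "v = w" using cong_small vw by auto
  qed
  have sub: "(\<lambda>v. idx l (a + 2*int v)) ` {..<?N} \<subseteq> {1..?N}" using idx_range by auto
  have "card ((\<lambda>v. idx l (a + 2*int v)) ` {..<?N}) = ?N" using card_image[OF inj] by simp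
  then have eq: "(\<lambda>v. idx l (a + 2*int v)) ` {..<?N} = {1..?N}"
    using sub by (intro card_subset_eq) auto
  have "idx l p \<in> {1..?N}" using idx_range by auto
  then have "idx l p \<in> (\<lambda>v. idx l (a + 2*int v)) ` {..<?N}" using eq by simp
  then obtain v where v: "v \<in> {..<?N}" "idx l p = idx l (a + 2*int v)" by (rule imageE)
  then have "int ?N dvd (a + 2*int v - p)" using idx_eq_iff by metis
  then show ?thesis using v(1) by auto
qed

lemma mod_decomp_int: "int (x mod N) = int x - int N * int (x div N)"
proof -
  have h: "int (x div N) * int N + int (x mod N) = int x"
    by (metis div_mult_mod_eq of_nat_add of_nat_mult)
  then show ?thesis by (simp add: algebra_simps)
qed

lemma H_reindex:
  "H n r l C = {e. e \<subseteq> {..<n} \<and> card e = r \<and>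
     (\<forall>t\<in>{..<2*l+1}. e \<inter> cint n (wt l C (i + 2*int t)) (wt l C (i + 2*int ((t+l) mod (2*l+1)))) \<noteq> {})}"
proof -
  let ?N = "2*l+1"
  have key: "int ?N dvd (a - (i + 2*int t)) \<Longrightarrow> int ?N dvd ((a - 1) - (i + 2*int ((t+l) mod ?N)))" for a t
  proof -
    assume d: "int ?N dvd (a - (i + 2*int t))"
    have E: "(a - 1) - (i + 2*int ((t+l) mod ?N)) = (a - (i + 2*int t)) + int ?N * (2 * int ((t+l) div ?N) - 1)"
      unfolding mod_decomp_int by (simp add: algebra_simps)
    show ?thesis unfolding E by (rule dvd_add[OF d dvd_triv_left])
  qed
  have iffAB: "(\<forall>p\<in>{1..int ?N}. e \<inter> cint n (wt l C p) (wt l C (p - 1)) \<noteq> {}) \<longleftrightarrow>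
        (\<forall>t\<in>{..<?N}. e \<inter> cint n (wt l C (i + 2*int t)) (wt l C (i + 2*int ((t+l) mod ?N))) \<noteq> {})" for e
  proof
    assume A: "\<forall>p\<in>{1..int ?N}. e \<inter> cint n (wt l C p) (wt l C (p - 1)) \<noteq> {}"
    show "\<forall>t\<in>{..<?N}. e \<inter> cint n (wt l C (i + 2*int t)) (wt l C (i + 2*int ((t+l) mod ?N))) \<noteq> {}"
    proof
      fix t assume t: "t \<in> {..<?N}"
      define p where "p = idx l (i + 2*int t)"
      have pr: "1 \<le> p" "p \<le> ?N" using idx_range unfolding p_def by auto
      have "idx l (int p) = idx l (i + 2*int t)" using idx_id[OF pr] unfolding p_def by simp
      then have d: "int ?N dvd (int p - (i + 2*int t))" unfolding idx_eq_iff .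
      have "wt l C (int p) = wt l C (i + 2*int t)" using wt_cong[OF d] .
      moreover have "wt l C (int p - 1) = wt l C (i + 2*int ((t+l) mod ?N))" using wt_cong[OF key[OF d]] .
      moreover have "int p \<in> {1..int ?N}" using pr by auto
      ultimately show "e \<inter> cint n (wt l C (i + 2*int t)) (wt l C (i + 2*int ((t+l) mod ?N))) \<noteq> {}"
        using A[rule_format, of "int p"] by simp
    qed
  next
    assume B: "\<forall>t\<in>{..<?N}. e \<inter> cint n (wt l C (i + 2*int t)) (wt l C (i + 2*int ((t+l) mod ?N))) \<noteq> {}"
    show "\<forall>p\<in>{1..int ?N}. e \<inter> cint n (wt l C p) (wt l C (p - 1)) \<noteq> {}"
    proof
      fix p assume p: "p \<in> {1..int ?N}"
      obtain t where t: "t < ?N" "int ?N dvd (i + 2*int t - p)" using surj2[of l i p] by blast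
      have d: "int ?N dvd (p - (i + 2*int t))" using t(2) by (metis dvd_minus_iff minus_diff_eq)
      have "wt l C p = wt l C (i + 2*int t)" using wt_cong[OF d] .
      moreover have "wt l C (p - 1) = wt l C (i + 2*int ((t+l) mod ?N))" using wt_cong[OF key[OF d]] .
      ultimately show "e \<inter> cint n (wt l C p) (wt l C (p - 1)) \<noteq> {}" using B[rule_format, of t] t(1) by simp
    qed
  qed
  show ?thesis unfolding H_def by (intro Collect_cong) (simp only: iffAB)
qed




lemma vtx_lt: "0 < n \<Longrightarrow> vtx n a < n"
  unfolding vtx_def by (simp add: nat_less_iff)

lemma int_vtx: "0 < n \<Longrightarrow> int (vtx n a) = a mod int n"
  unfolding vtx_def by simp

locale msetup =
  fixes n r l k :: nat and C :: "nat \<Rightarrow> nat" and i j :: int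
  assumes l1: "1 \<le> l" and sv: "semi_valid n l C" and k1: "1 \<le> k" and kl: "k \<le> l"
    and cons: "consec_with n l C i k j"
    and svm: "semi_valid n l (shiftC n l C i k j (-1))"
    and svp: "semi_valid n l (shiftC n l C i k j 1)"
begin

definition c :: "nat \<Rightarrow> nat" where "c t = wt l C (i + 2*int t)"
definition cm :: "int \<Rightarrow> nat \<Rightarrow> nat" where "cm m t = wt l (shiftC n l C i k j m) (i + 2*int t)"
definition z :: nat where "z = vtx n (j-1)"
definition P :: "nat \<Rightarrow> nat" where "P x = cwd n z x"

lemma cong_t: assumes "t < 2*l+1" "s < 2*l+1" "idx l (i + 2*int t) = idx l (i + 2*int s)" shows "t = s"
proof -
  have "int (2*l+1) dvd 2*(int t - int s)" using assms(3) unfolding idx_eq_iff by (simp add: algebra_simps)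
  then show ?thesis using cong_small assms(1,2) by blast
qed

lemma cm_val: assumes t: "t < 2*l+1"
  shows "cm m t = (if t < k then vtx n (j + int t + m) else c t)"
proof (cases "t < k")
  case True
  let ?q = "idx l (i + 2*int t)"
  have ex: "\<exists>s. s < k \<and> idx l (i + 2*int s) = ?q" using True by blast
  define s0 where "s0 = (SOME s. s < k \<and> idx l (i + 2*int s) = ?q)"
  have s0: "s0 < k \<and> idx l (i + 2*int s0) = ?q" unfolding s0_def by (rule someI_ex[OF ex])
  then have "s0 = t" using cong_t[of s0 t] kl t by auto
  have "cm m t = vtx n (j + int s0 + m)"
    unfolding cm_def wt_def shiftC_def s0_def[symmetric] using ex by auto
  then show ?thesis using \<open>s0 = t\<close> True by simp
next
  case False
  have nex: "\<not> (\<exists>s<k. idx l (i + 2*int s) = idx l (i + 2*int t))"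
  proof
    assume "\<exists>s<k. idx l (i + 2*int s) = idx l (i + 2*int t)"
    then obtain s where "s < k" "idx l (i + 2*int s) = idx l (i + 2*int t)" by blast
    then have "s = t" using cong_t[of s t] kl t by auto
    then show False using \<open>s < k\<close> False by simp
  qed
  show ?thesis unfolding cm_def c_def wt_def shiftC_def using nex False by auto
qed

lemma cons_c: "t < k \<Longrightarrow> c t = vtx n (j + int t)"
  using cons unfolding consec_with_def c_def by simp

lemma N_le_n: "2*l+1 \<le> n"
proof -
  have "card {1..2*l+1} \<le> card {..<n}"
    using sv_inj[OF sv] by (intro card_inj_on_le) auto
  then show ?thesis by simp
qed

lemma npos: "0 < n" using N_le_n by simp
lemma kn: "k + 1 < n" using N_le_n k1 kl by simp

lemma c_lt: "c t < n"
proof -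
  have "idx l (i + 2*int t) \<in> {1..2*l+1}" using idx_range by auto
  then have "C (idx l (i + 2*int t)) \<in> C ` {1..2*l+1}" by (rule imageI)
  then show ?thesis using sv_inj(2)[OF sv] unfolding c_def wt_def by blast
qed

lemma c_inj: assumes "t1 < 2*l+1" "t2 < 2*l+1" "c t1 = c t2" shows "t1 = t2"
proof -
  have "idx l (i + 2*int t1) \<in> {1..2*l+1}" "idx l (i + 2*int t2) \<in> {1..2*l+1}" using idx_range by auto
  then have "idx l (i + 2*int t1) = idx l (i + 2*int t2)"
    using inj_onD[OF sv_inj(1)[OF sv]] assms(3) unfolding c_def wt_def by blast
  then show ?thesis using cong_t assms by blast
qed

lemma vtx_eq: assumes "vtx n a = vtx n b" shows "int n dvd (a - b)"
proof -
  have "a mod int n = b mod int n" using assms int_vtx[OF npos] by metis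
  then show ?thesis by (simp add: mod_eq_dvd_iff)
qed

lemma cm_idx: "cm m t = shiftC n l C i k j m (idx l (i + 2*int t))"
  unfolding cm_def wt_def by simp

lemma c_ne_z: assumes t: "t < 2*l+1" shows "c t \<noteq> z"
proof (cases "t < k")
  case True
  show ?thesis
  proof
    assume "c t = z"
    then have "vtx n (j + int t) = vtx n (j - 1)" using cons_c[OF True] unfolding z_def by simp
    then have "int n dvd (int t + 1)" using vtx_eq by fastforce
    then have "int n \<le> int t + 1" by (intro zdvd_imp_le) auto
    then show False using True kn by simp
  qed
next
  case False
  let ?D = "shiftC n l C i k j (-1)"
  have a: "?D (idx l (i + 2*int 0)) = z" using cm_val[of 0 "-1"] k1 cm_idx[of "-1" 0] unfolding z_def by simp
  have b: "?D (idx l (i + 2*int t)) = c t" using cm_val[OF t, of "-1"] False cm_idx[of "-1" t] by simp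
  show ?thesis
  proof
    assume "c t = z"
    then have "idx l (i + 2*int 0) = idx l (i + 2*int t)"
      using a b inj_onD[OF sv_inj(1)[OF svm]] idx_range by (metis atLeastAtMost_iff)
    then have "0 = t" using cong_t t by simp
    then show False using False k1 by simp
  qed
qed

lemma c_ne_top: assumes t: "t < 2*l+1" "k \<le> t" shows "c t \<noteq> vtx n (j + int k)"
proof
  let ?D = "shiftC n l C i k j 1"
  have kk: "k - 1 < 2*l+1" "k - 1 < k" using kl k1 by auto
  have a: "?D (idx l (i + 2*int (k-1))) = vtx n (j + int k)"
    using cm_val[OF kk(1), of 1] kk(2) cm_idx[of 1 "k-1"] k1 by (simp add: of_nat_diff)
  have b: "?D (idx l (i + 2*int t)) = c t" using cm_val[OF t(1), of 1] t(2) cm_idx[of 1 t] by simp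
  assume "c t = vtx n (j + int k)"
  then have "idx l (i + 2*int (k-1)) = idx l (i + 2*int t)"
    using a b inj_onD[OF sv_inj(1)[OF svp]] idx_range by (metis atLeastAtMost_iff)
  then have "k - 1 = t" using cong_t t kk by simp
  then show False using t k1 by simp
qed

lemma P_vtx: "P (vtx n (j + a)) = nat ((a + 1) mod int n)"
proof -
  have "int (vtx n (j + a)) - int z = (j + a) mod int n - (j - 1) mod int n"
    unfolding z_def using int_vtx[OF npos] by simp
  then have "(int (vtx n (j + a)) - int z) mod int n = ((j + a) - (j - 1)) mod int n"
    by (simp add: mod_diff_eq)
  then show ?thesis unfolding P_def cwd_def by simp
qed

lemma P_vtx_small: assumes "0 \<le> a + 1" "a + 1 < int n" shows "P (vtx n (j + a)) = nat (a + 1)"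
  using P_vtx[of a] assms by (simp add: mod_pos_pos_trivial)

lemma P_lt: "P x < n" unfolding P_def using cwd_lt[OF npos] .

lemma P_inj: "x < n \<Longrightarrow> y < n \<Longrightarrow> P x = P y \<Longrightarrow> x = y"
  using cwd_inj[OF npos, of z] unfolding P_def by (auto dest: inj_onD)

lemma Pc_small: "t < k \<Longrightarrow> P (c t) = t + 1"
  using cons_c P_vtx_small[of "int t"] kn by simp

lemma c0: "c 0 = vtx n j" using cons_c[of 0] k1 by simp

lemma P_from_c0: assumes "x < n" "x \<noteq> z" shows "P x = cwd n (c 0) x + 1"
proof -
  have zc: "int (cwd n (c 0) z) = int n - 1"
  proof -
    have "int (cwd n (c 0) z) = (int z - int (c 0)) mod int n" unfolding cwd_def using npos by simp
    also have "\<dots> = ((j - 1) mod int n - j mod int n) mod int n"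
      unfolding z_def c0 using int_vtx[OF npos] by simp
    also have "\<dots> = ((j - 1) - j) mod int n" by (simp add: mod_diff_eq)
    also have "\<dots> = int n - 1" using npos by (simp add: mod_small_neg)
    finally show ?thesis .
  qed
  have z_lt: "z < n" unfolding z_def using vtx_lt[OF npos] .
  have c0_lt: "c 0 < n" using c_lt .
  have ne: "cwd n (c 0) x \<noteq> cwd n (c 0) z"
    using cwd_inj[OF npos, of "c 0"] assms z_lt by (auto dest: inj_onD)
  have lt: "cwd n (c 0) x < n" using cwd_lt[OF npos] .
  then have lt2: "int (cwd n (c 0) x) + 1 < int n" using ne zc by linarith
  have "int (P x) = (int (cwd n (c 0) x) - int (cwd n (c 0) z)) mod int n"
    unfolding P_def using cwd_rebase[OF npos] .
  also have "\<dots> = (int (cwd n (c 0) x) + 1) mod int n" unfolding zc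
    by (metis (no_types, opaque_lifting) add.commute diff_diff_eq2 mod_add_self2 diff_add_cancel)
  also have "\<dots> = int (cwd n (c 0) x) + 1" using lt2 by (intro mod_pos_pos_trivial) auto
  finally show ?thesis by simp
qed

lemma Pc_mono: assumes "t1 < t2" "t2 < 2*l+1" shows "P (c t1) < P (c t2)"
proof -
  let ?N = "2*l+1"
  obtain u where u: "u < ?N" "int ?N dvd (1 + 2*int u - i)" using surj2[of l 1 i] by blast
  have cv: "c t = wt l C (int (1 + 2*((u+t) mod ?N)))" for t
  proof -
    have E: "(i + 2*int t) - int (1 + 2*((u+t) mod ?N)) = - (1 + 2*int u - i) + int ?N * (2 * int ((u+t) div ?N))"
      unfolding of_nat_add of_nat_mult mod_decomp_int by (simp add: algebra_simps)
    have "int ?N dvd ((i + 2*int t) - int (1 + 2*((u+t) mod ?N)))"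
      unfolding E
    proof (rule dvd_add)
      show "int ?N dvd - (1 + 2*int u - i)" using u(2) by (simp only: dvd_minus_iff)
    qed simp
    then show ?thesis unfolding c_def by (rule wt_cong)
  qed
  define a where "a v = int (cwd n (C 1) (wt l C (int (1 + 2*v))))" for v
  have rng: "0 \<le> a v \<and> a v < int n" if "v < ?N" for v unfolding a_def using cwd_lt[OF npos] by auto
  have mono: "a v < a w" if "v < w" "w < ?N" for v w
    unfolding a_def using sv_order[OF sv that] by simp
  have cu: "c 0 = wt l C (int (1 + 2*u))" using cv[of 0] u(1) by simp
  have cw: "int (cwd n (c 0) (c t)) = (a ((u+t) mod ?N) - a u) mod int n" for t
  proof -
    have "int (cwd n (c 0) (c t)) = (int (cwd n (C 1) (c t)) - int (cwd n (C 1) (c 0))) mod int n"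
      using cwd_rebase[OF npos] .
    then show ?thesis unfolding a_def cu using cv[of t] by simp
  qed
  have "cwd n (c 0) (c t1) < cwd n (c 0) (c t2)"
    using rot_mono[of ?N a "int n" u t1 t2] rng mono u(1) assms cw[of t1] cw[of t2] by simp
  then show ?thesis using P_from_c0[OF c_lt c_ne_z] assms by simp
qed

lemma Pc_mono_le: "t1 \<le> t2 \<Longrightarrow> t2 < 2*l+1 \<Longrightarrow> P (c t1) \<le> P (c t2)"
  using Pc_mono[of t1 t2] by (cases "t1 = t2") auto

lemma Pc_gap: "t + d < 2*l+1 \<Longrightarrow> P (c t) + d \<le> P (c (t + d))"
proof (induction d)
  case (Suc d)
  then have "P (c t) + d \<le> P (c (t + d))" by simp
  moreover have "P (c (t + d)) < P (c (t + Suc d))" using Pc_mono[of "t+d" "t + Suc d"] Suc.prems by simp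
  ultimately show ?case by simp
qed simp

lemma Pc_big: assumes "k \<le> t" "t < 2*l+1" shows "k + 1 < P (c t)" "P (c t) < n"
proof -
  have "P (c (k-1)) < P (c t)" using Pc_mono[of "k-1" t] assms k1 by simp
  then have g: "k < P (c t)" using Pc_small[of "k-1"] k1 by simp
  have "P (vtx n (j + int k)) = k + 1" using P_vtx_small[of "int k"] kn by simp
  moreover have "c t \<noteq> vtx n (j + int k)" using c_ne_top assms by blast
  ultimately have "P (c t) \<noteq> k + 1" using P_inj[OF c_lt vtx_lt[OF npos]] by metis
  then show "k + 1 < P (c t)" using g by simp
  show "P (c t) < n" using P_lt .
qed

definition al :: "nat \<Rightarrow> nat" where "al s = P (c (l + s))"
definition be :: "nat \<Rightarrow> nat" where "be s = P (c (l + s + 1))"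
definition FA :: "nat \<Rightarrow> nat set" where "FA t = P ` cint n (c t) (c ((t+l) mod (2*l+1)))"
definition fixd :: "nat \<Rightarrow> bool" where "fixd t \<longleftrightarrow> t < 2*l+1 \<and> k \<le> t \<and> \<not> (l+1 \<le> t \<and> t \<le> l+k)"
definition Fx :: "nat set set" where "Fx = FA ` {t. fixd t}"

lemma P_cint: "P ` cint n (c a) (c b) = (if P (c a) \<le> P (c b) then {P (c a)..P (c b)}
            else {P (c a)..<n} \<union> {..P (c b)})"
  unfolding P_def using cint_image[OF npos c_lt c_lt] .

lemma fixd_mod: assumes "fixd t"
  shows "(t+l) mod (2*l+1) = (if t \<le> l then t + l else t - l - 1)" "k \<le> (t+l) mod (2*l+1)"
    "(t+l) mod (2*l+1) < 2*l+1"
proof -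
  show e: "(t+l) mod (2*l+1) = (if t \<le> l then t + l else t - l - 1)"
    using assms unfolding fixd_def by (auto simp: mod_if)
  show "k \<le> (t+l) mod (2*l+1)" unfolding e using assms kl unfolding fixd_def by auto
  show "(t+l) mod (2*l+1) < 2*l+1" by simp
qed

lemma core_inst: "core n k Fx al be"
proof
  show "1 \<le> k" by (rule k1)
  show "k + 1 < al s \<and> al s < n" if "s < k" for s
    unfolding al_def using Pc_big[of "l+s"] that kl by auto
  show "k + 1 < be s \<and> be s < n" if "s < k" for s
    unfolding be_def using Pc_big[of "l+s+1"] that kl by auto
  fix f assume "f \<in> Fx"
  then obtain t where t: "fixd t" "f = FA t" unfolding Fx_def by auto
  have a: "k + 1 < P (c t)" using Pc_big[of t] t(1) unfolding fixd_def by auto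
  have b: "k + 1 < P (c ((t+l) mod (2*l+1)))" using Pc_big fixd_mod[OF t(1)] by blast
  show "{..k+1} \<subseteq> f \<or> {..k+1} \<inter> f = {}"
    unfolding t(2) FA_def P_cint using a b by auto
qed

lemma wfx: assumes "f \<in> Fx" shows "{..k+1} \<subseteq> f \<or> (P (c (l+1)) \<in> f \<and> P (c (l+k-1)) \<in> f)"
proof -
  obtain t where t: "fixd t" "f = FA t" using assms unfolding Fx_def by auto
  have tr: "t < 2*l+1" "k \<le> t" using t(1) unfolding fixd_def by auto
  show ?thesis
  proof (cases "t \<le> l")
    case True
    then have e: "(t+l) mod (2*l+1) = t + l" using fixd_mod(1)[OF t(1)] by simp
    have lt: "P (c t) < P (c (t+l))" using Pc_mono[of t "t+l"] True l1 by auto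
    have f: "f = {P (c t)..P (c (t+l))}" unfolding t(2) FA_def e P_cint using lt by simp
    have "P (c t) \<le> P (c (l+1))" "P (c (l+1)) \<le> P (c (t+l))"
      using Pc_mono_le[of t "l+1"] Pc_mono_le[of "l+1" "t+l"] True tr k1 by auto
    moreover have "P (c t) \<le> P (c (l+k-1))" "P (c (l+k-1)) \<le> P (c (t+l))"
      using Pc_mono_le[of t "l+k-1"] Pc_mono_le[of "l+k-1" "t+l"] True tr k1 kl by auto
    ultimately show ?thesis unfolding f by auto
  next
    case False
    then have e: "(t+l) mod (2*l+1) = t - l - 1" using fixd_mod(1)[OF t(1)] by simp
    have lt: "P (c (t-l-1)) < P (c t)" using Pc_mono[of "t-l-1" t] False tr by auto
    have b: "k + 1 < P (c (t-l-1))" using Pc_big fixd_mod[OF t(1)] e by metis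
    have f: "f = {P (c t)..<n} \<union> {..P (c (t-l-1))}" unfolding t(2) FA_def e P_cint using lt by simp
    show ?thesis unfolding f using b by auto
  qed
qed

end

sublocale msetup \<subseteq> CI: core n k r Fx al be by (rule core_inst)

context msetup begin

lemma PA:
  assumes m: "-1 \<le> m" "m \<le> 1" and t: "t < 2*l+1"
  defines "pm \<equiv> \<lambda>t. (if t < k then vtx n (j + int t + m) else c t)"
  shows "P ` cint n (pm t) (pm ((t+l) mod (2*l+1))) =
    (if t < k then {t + nat (m+1)..al t}
     else if l+1 \<le> t \<and> t \<le> l+k then {be (t-l-1)..<n} \<union> {..(t-l-1) + nat (m+1)} else FA t)"
proof -
  have Psm: "P (vtx n (j + int s + m)) = s + nat (m+1)" if "s < k" for s
  proof -
    have "P (vtx n (j + (int s + m))) = nat (int s + m + 1)"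
      using P_vtx_small[of "int s + m"] m that kn by simp
    then show ?thesis using m by (simp add: algebra_simps nat_add_distrib)
  qed
  have vl: "vtx n a < n" for a using vtx_lt[OF npos] .
  show ?thesis
  proof (cases "t < k")
    case True
    have e: "(t+l) mod (2*l+1) = t + l" using True kl by simp
    have p1: "P (pm t) = t + nat (m+1)" unfolding pm_def using True Psm by simp
    have p2: "pm (t+l) = c (l+t)" unfolding pm_def using kl by (simp add: add.commute)
    have big: "k+1 < P (c (l+t))" using Pc_big[of "l+t"] True kl by auto
    have "P ` cint n (pm t) (pm (t+l)) = (if P (pm t) \<le> P (pm (t+l)) then {P (pm t)..P (pm (t+l))}
            else {P (pm t)..<n} \<union> {..P (pm (t+l))})"
      unfolding P_def by (rule cint_image[OF npos]) (auto simp: pm_def vl c_lt)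
    also have "\<dots> = {t + nat (m+1)..al t}" unfolding p1 p2 al_def using big True m by auto
    finally show ?thesis unfolding e using True by simp
  next
    case False
    show ?thesis
    proof (cases "l+1 \<le> t \<and> t \<le> l+k")
      case True
      define s where "s = t - l - 1"
      have s: "s < k" "t = l + s + 1" using True unfolding s_def by auto
      have e: "(t+l) mod (2*l+1) = s" using s kl by (simp add: mod_if)
      have p1: "pm t = c (l+s+1)" unfolding pm_def using False s by simp
      have p2: "P (pm s) = s + nat (m+1)" unfolding pm_def using s Psm by simp
      have big: "k+1 < P (c (l+s+1))" using Pc_big[of "l+s+1"] s kl by auto
      have "P ` cint n (pm t) (pm s) = (if P (pm t) \<le> P (pm s) then {P (pm t)..P (pm s)}
              else {P (pm t)..<n} \<union> {..P (pm s)})"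
        unfolding P_def by (rule cint_image[OF npos]) (auto simp: pm_def vl c_lt)
      also have "\<dots> = {be s..<n} \<union> {..s + nat (m+1)}" unfolding p1 p2 be_def using big s m by auto
      finally show ?thesis unfolding e using False True s_def by simp
    next
      case True2: False
      then have fx: "fixd t" unfolding fixd_def using False t by auto
      have p1: "pm t = c t" unfolding pm_def using False by simp
      have p2: "pm ((t+l) mod (2*l+1)) = c ((t+l) mod (2*l+1))"
        unfolding pm_def using fixd_mod(2)[OF fx] by simp
      have "P ` cint n (pm t) (pm ((t+l) mod (2*l+1))) = FA t" unfolding p1 p2 FA_def ..
      then show ?thesis by (subst if_not_P[OF False], subst if_not_P[OF True2])
    qed
  qed
qed

lemma profile_card:
  assumes m: "-1 \<le> m" "m \<le> 1"
    and prof: "\<And>t. t < 2*l+1 \<Longrightarrow> wt l C' (i + 2*int t) = (if t < k then vtx n (j + int t + m) else c t)"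
  shows "card (H n r l C') = card (CI.G (nat (m+1)))"
proof -
  let ?N = "2*l+1"
  define pm where "pm = (\<lambda>t. (if t < k then vtx n (j + int t + m) else c t))"
  define A where "A t = cint n (pm t) (pm ((t+l) mod ?N))" for t
  have H1: "H n r l C' = {e. e \<subseteq> {..<n} \<and> card e = r \<and> (\<forall>t\<in>{..<?N}. e \<inter> A t \<noteq> {})}"
  proof -
    have "wt l C' (i + 2*int ((t+l) mod ?N)) = pm ((t+l) mod ?N)" for t
      using prof[of "(t+l) mod ?N"] unfolding pm_def by simp
    moreover have "wt l C' (i + 2*int t) = pm t" if "t \<in> {..<?N}" for t
      using prof[of t] that unfolding pm_def by simp
    ultimately show ?thesis unfolding H_reindex[of n r l C' i] A_def
      by (intro Collect_cong conj_cong refl ball_cong) simp_all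
  qed
  have As: "A t \<subseteq> {..<n}" for t unfolding A_def cint_def by auto
  have bij: "bij_betw P {..<n} {..<n}" unfolding P_def by (rule cwd_bij[OF npos])
  have c1: "card (H n r l C') = card {E. E \<subseteq> {..<n} \<and> card E = r \<and> (\<forall>t\<in>{..<?N}. E \<inter> P ` A t \<noteq> {})}"
    unfolding H1 by (rule relabel[OF bij As])
  let ?m = "nat (m+1)"
  have PAt: "P ` A t = (if t < k then {t + ?m..al t}
     else if l+1 \<le> t \<and> t \<le> l+k then {be (t-l-1)..<n} \<union> {..(t-l-1) + ?m} else FA t)" if "t < ?N" for t
    unfolding A_def pm_def using PA[OF m that] by simp
  have PA_D: "P ` A t = {t + ?m..al t}" if "t < k" for t
    using PAt[of t] that kl by simp
  have PA_E: "P ` A (l+s+1) = {be s..<n} \<union> {..s + ?m}" if "s < k" for s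
  proof -
    have t: "l+s+1 < ?N" "\<not> l+s+1 < k" "l+1 \<le> l+s+1 \<and> l+s+1 \<le> l+k" using that kl by auto
    have "P ` A (l+s+1) = {be (l+s+1-l-1)..<n} \<union> {..(l+s+1-l-1) + ?m}"
      using PAt[OF t(1)] by (subst (asm) if_not_P[OF t(2)], subst (asm) if_P[OF t(3)])
    then show ?thesis by simp
  qed
  have PA_F: "P ` A t = FA t" if "fixd t" for t
  proof -
    have t: "t < ?N" "\<not> t < k" "\<not> (l+1 \<le> t \<and> t \<le> l+k)" using that unfolding fixd_def by auto
    show ?thesis using PAt[OF t(1)] by (subst (asm) if_not_P[OF t(2)], subst (asm) if_not_P[OF t(3)])
  qed
  have eqv: "(\<forall>t\<in>{..<?N}. E \<inter> P ` A t \<noteq> {}) \<longleftrightarrow>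
     (\<forall>f\<in>Fx. E \<inter> f \<noteq> {}) \<and> (\<forall>s<k. E \<inter> {s + ?m..al s} \<noteq> {}) \<and> (\<forall>s<k. E \<inter> ({be s..<n} \<union> {..s + ?m}) \<noteq> {})" for E
  proof
    assume L: "\<forall>t\<in>{..<?N}. E \<inter> P ` A t \<noteq> {}"
    have F: "\<forall>f\<in>Fx. E \<inter> f \<noteq> {}"
    proof
      fix f assume "f \<in> Fx"
      then obtain t where t: "fixd t" "f = FA t" unfolding Fx_def by auto
      then have "t \<in> {..<?N}" unfolding fixd_def by auto
      then have "E \<inter> P ` A t \<noteq> {}" using L by blast
      then show "E \<inter> f \<noteq> {}" using PA_F[OF t(1)] t(2) by simp
    qed
    have D: "\<forall>s<k. E \<inter> {s + ?m..al s} \<noteq> {}"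
    proof (intro allI impI)
      fix s assume "s < k"
      then have "s \<in> {..<?N}" using kl by simp
      then have "E \<inter> P ` A s \<noteq> {}" using L by blast
      then show "E \<inter> {s + ?m..al s} \<noteq> {}" using PA_D[OF \<open>s < k\<close>] by simp
    qed
    have Ee: "\<forall>s<k. E \<inter> ({be s..<n} \<union> {..s + ?m}) \<noteq> {}"
    proof (intro allI impI)
      fix s assume s: "s < k"
      have "l+s+1 \<in> {..<?N}" using s kl by auto
      then have "E \<inter> P ` A (l+s+1) \<noteq> {}" using L by blast
      then show "E \<inter> ({be s..<n} \<union> {..s + ?m}) \<noteq> {}" using PA_E[OF s] by simp
    qed
    show "(\<forall>f\<in>Fx. E \<inter> f \<noteq> {}) \<and> (\<forall>s<k. E \<inter> {s + ?m..al s} \<noteq> {}) \<and> (\<forall>s<k. E \<inter> ({be s..<n} \<union> {..s + ?m}) \<noteq> {})"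
      using F D Ee by blast
  next
    assume R: "(\<forall>f\<in>Fx. E \<inter> f \<noteq> {}) \<and> (\<forall>s<k. E \<inter> {s + ?m..al s} \<noteq> {}) \<and> (\<forall>s<k. E \<inter> ({be s..<n} \<union> {..s + ?m}) \<noteq> {})"
    show "\<forall>t\<in>{..<?N}. E \<inter> P ` A t \<noteq> {}"
    proof
      fix t assume t: "t \<in> {..<?N}"
      then have tN: "t < ?N" by simp
      show "E \<inter> P ` A t \<noteq> {}"
      proof (cases "t < k")
        case True
        then show ?thesis using R PA_D[OF True] by auto
      next
        case False
        show ?thesis
        proof (cases "l+1 \<le> t \<and> t \<le> l+k")
          case True
          then have s: "t - l - 1 < k" "t = l + (t-l-1) + 1" by auto
          have "E \<inter> ({be (t-l-1)..<n} \<union> {..(t-l-1) + ?m}) \<noteq> {}" using R s(1) by blast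
          then have "E \<inter> P ` A (l + (t-l-1) + 1) \<noteq> {}" using PA_E[OF s(1)] by simp
          then show ?thesis using s(2) by simp
        next
          case False2: False
          then have "fixd t" unfolding fixd_def using False tN by auto
          then have "FA t \<in> Fx" unfolding Fx_def by auto
          then show ?thesis using R PA_F[OF \<open>fixd t\<close>] by auto
        qed
      qed
    qed
  qed
  have G_eq: "CI.G ?m = {E. E \<subseteq> {..<n} \<and> card E = r \<and> ((\<forall>f\<in>Fx. E \<inter> f \<noteq> {}) \<and>
      (\<forall>s<k. E \<inter> {s + ?m..al s} \<noteq> {}) \<and> (\<forall>s<k. E \<inter> ({be s..<n} \<union> {..s + ?m}) \<noteq> {}))}"
    unfolding CI.G_def CI.Phi_def CI.Dm_def CI.Em_def by auto
  have "{E. E \<subseteq> {..<n} \<and> card E = r \<and> (\<forall>t\<in>{..<?N}. E \<inter> P ` A t \<noteq> {})} = CI.G ?m"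
    unfolding G_eq by (intro Collect_cong conj_cong refl) (rule eqv)
  then show ?thesis using c1 by simp
qed

lemma cards:
  "card (H n r l (shiftC n l C i k j (-1))) = card (CI.G 0)"
  "card (H n r l C) = card (CI.G 1)"
  "card (H n r l (shiftC n l C i k j 1)) = card (CI.G 2)"
proof -
  have "card (H n r l (shiftC n l C i k j (-1))) = card (CI.G (nat (-1+1)))"
    by (rule profile_card) (use cm_val in \<open>auto simp: cm_def\<close>)
  then show "card (H n r l (shiftC n l C i k j (-1))) = card (CI.G 0)" by simp
  have "card (H n r l C) = card (CI.G (nat (0+1)))"
    by (rule profile_card) (use cons_c in \<open>auto simp: c_def\<close>)
  then show "card (H n r l C) = card (CI.G 1)" by simp
  have "card (H n r l (shiftC n l C i k j 1)) = card (CI.G (nat (1+1)))"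
    by (rule profile_card) (use cm_val in \<open>auto simp: cm_def\<close>)
  then show "card (H n r l (shiftC n l C i k j 1)) = card (CI.G 2)" by simp
qed

lemma final_main:
  "min (card (H n r l (shiftC n l C i k j (-1)))) (card (H n r l (shiftC n l C i k j 1))) \<le> card (H n r l C)"
  using CI.core_main unfolding cards by linarith

lemma final_strict: assumes "3 \<le> r" "3*r - 5 \<le> n"
  shows "min (card (H n r l (shiftC n l C i k j (-1)))) (card (H n r l (shiftC n l C i k j 1))) < card (H n r l C)"
proof -
  let ?g = "P (c (l+1))" and ?d = "P (c (l+k-1))"
  have g1: "al 0 < ?g" unfolding al_def using Pc_mono[of l "l+1"] l1 by simp
  have g2: "?g < n" using P_lt .
  have g3: "?g \<le> al s" if "1 \<le> s" "s < k" for s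
    unfolding al_def using Pc_mono_le[of "l+1" "l+s"] that kl by simp
  have d1: "k + 1 < ?d" using Pc_big[of "l+k-1"] l1 kl k1 by simp
  have d2: "?d < be (k-1)" unfolding be_def using Pc_mono[of "l+k-1" "l+(k-1)+1"] k1 kl by simp
  have d3: "be t \<le> ?d" if "t + 1 < k" for t
    unfolding be_def using Pc_mono_le[of "l+t+1" "l+k-1"] that kl by simp
  have ab: "al 0 + k \<le> be (k-1)" unfolding al_def be_def using Pc_gap[of l k] k1 kl by simp
  have "card (CI.G 0) + card (CI.G 2) < 2 * card (CI.G 1)"
    by (rule CI.core_strict2[OF wfx g1 g2 g3 d1 d2 d3 ab assms])
  then show ?thesis unfolding cards by linarith
qed

end


theorem proposition3p7:
  fixes n r l k :: nat and C :: "nat \<Rightarrow> nat" and i j :: int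
  assumes "r \<ge> 2" and "l \<ge> 1"
    and "semi_valid n l C"
    and "1 \<le> k" and "k \<le> l"
    and "consec_with n l C i k j"
    and "semi_valid n l (shiftC n l C i k j (-1))"
    and "semi_valid n l (shiftC n l C i k j 0)"
    and "semi_valid n l (shiftC n l C i k j 1)"
  shows "card (H n r l C) \<ge> min (card (H n r l (shiftC n l C i k j (-1))))
                                 (card (H n r l (shiftC n l C i k j 1)))
    \<and> (r \<ge> 3 \<and> n \<ge> 3*r - 5 \<longrightarrow>
         card (H n r l C) > min (card (H n r l (shiftC n l C i k j (-1))))
                                (card (H n r l (shiftC n l C i k j 1))))"
proof -
  interpret msetup n r l k C i j
    by (unfold_locales) (use assms in auto)
  show ?thesis using final_main final_strict by auto
qed

end
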